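(* In the setting described in the context, suppose the current primal-dual iterate $(p, v)$ satisfies: (a) the centrality conditions; (b) $\gamma = \Theta(\Xi^{-1})$; (c) $\mathbf{u} \ll \Xi$; (d) the primal step is computed by a backward stable method, i.e. the computed solution of $K_\gamma x = b$ solves $(K_\gamma + \Delta_s K_\gamma)\widehat{x} = b$ for a symmetric $\Delta_s K_\gamma$ with $\|\Delta_s K_\gamma\| \le \mathbf{u}\varepsilon_n \|K_\gamma\|$, $\varepsilon_n$ a small constant depending on $n$. Then, in exact arithmetic, the Schur complement $S_\gamma := G K_\gamma^{-1} G^\top$ satisfies $$S_\gamma = G Y\, \Sigma_L^{-1}\, Y^\top G^\top + O(\Xi^2).$$
   Context: Problem: minimize $f(x)$ over $x\in\mathbb{R}^n$, $s\in\mathbb{R}^{m_i}$ subject to $g(x)=0$, $h(x)+s=0$, $s\ge0$, $g:\mathbb{R}^n\to\mathbb{R}^{m_e}$, $h:\mathbb{R}^n\to\mathbb{R}^{m_i}$, $f$ smooth; $x$ unconstrained. Lagrangian $L(p,v) = f(x)+y^\top g(x)+z^\top(h(x)+s)-v^\top s$, $p=(x,s,y,z)$. $(p^\star,v^\star)$ is a KKT point with $\nabla^2_{xx}L$ Lipschitz near it, LICQ, strict complementarity and second-order sufficiency. Active set $\mathcal{B} = \{i: h_i(x^\star)=0\}$, $m_a = |\mathcal{B}|$, $\ell = m_e+m_a$. Duality measure $\Xi = s^\top v/m_i$; centrality conditions: $\|\nabla_pL(p,v)\|\le C\Xi$, $(s,v)>0$, $s_iv_i\ge\alpha\Xi$ for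 all $i$ ($C>0$, $\alpha\in(0,1)$ fixed). At the iterate: $W=\nabla^2_{xx}L$, $G=\nabla g(x)$, $H=\nabla h(x)$, active Jacobian $A = \begin{bmatrix} H_{\mathcal{B}} \\ G\end{bmatrix}$, $S = \mathrm{diag}(s)$, $V=\mathrm{diag}(v)$, condensed matrix $K_\gamma = W + H^\top S^{-1}VH + \gamma G^\top G$. Spectral decomposition $K_\gamma = U_L\Sigma_LU_L^\top + U_S\Sigma_SU_S^\top$, where $\Sigma_L\in\mathbb{R}^{\ell\times\ell}$ is the diagonal matrix of the $\ell$ largest-magnitude eigenvalues, $\Sigma_S$ the diagonal matrix of the remaining $n-\ell$ eigenvalues, and $U_L, U_S$ have orthonormal columns with $U_L^\top U_S = 0$; $Y$ and $Z$ are matrices with orthonormal columns spanning respectively the row space and the null space of $A$, chosen so that $U_L - Y = O(\underline{\sigma}^{-1})$ and $U_S - Z = O(\underline{\sigma}^{-1})$, where $\underline{\sigma} = \min(1/\Xi,\gamma)$. $\mathbf{u}$ is the unit roundoff; $\ll$ means "much smaller than". $O(\cdot)$, $\Theta(\cdot)$: norm bounded above (resp. above and below) by constants independent of the iterate times the argument. *)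

theory Defs
  imports "HOL-Analysis.Analysis"
begin

definition diagm :: "real^'n \<Rightarrow> real^'n^'n" where
  "diagm d = (\<chi> i j. if i = j then d$i else 0)"

definition colmask :: "'n set \<Rightarrow> real^'n^'m \<Rightarrow> real^'n^'m" where
  "colmask L M = (\<chi> i j. if j \<in> L then M$i$j else 0)"

definition indvec :: "'n set \<Rightarrow> real^'n" where
  "indvec L = (\<chi> j. if j \<in> L then 1 else 0)"

definition hessL ::
  "(real^'n::finite \<Rightarrow> real^'n^'n) \<Rightarrow> ('e::finite \<Rightarrow> real^'n \<Rightarrow> real^'n^'n)
   \<Rightarrow> ('i::finite \<Rightarrow> real^'n \<Rightarrow> real^'n^'n) \<Rightarrow> real^'n \<Rightarrow> real^'e \<Rightarrow> real^'i \<Rightarrow> real^'n^'n"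
  where "hessL fH gH hH x y z =
     fH x + (\<Sum>i\<in>UNIV. y$i *\<^sub>R gH i x) + (\<Sum>i\<in>UNIV. z$i *\<^sub>R hH i x)"

text \<open>Gradient of L(p,v) with respect to p = (x,s,y,z).
  Jacobians: row k of Jg x is the gradient of g_k at x.\<close>
definition gradpL ::
  "(real^'n \<Rightarrow> real^'n) \<Rightarrow> (real^'n \<Rightarrow> real^'n^'e) \<Rightarrow> (real^'n \<Rightarrow> real^'n^'i)
   \<Rightarrow> (real^'n \<Rightarrow> real^'e) \<Rightarrow> (real^'n \<Rightarrow> real^'i)
   \<Rightarrow> real^'n \<Rightarrow> real^'i \<Rightarrow> real^'e \<Rightarrow> real^'i \<Rightarrow> real^'i
   \<Rightarrow> (real^'n) \<times> (real^'i) \<times> (real^'e) \<times> (real^'i)"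
  where "gradpL fg Jg Jh g h x s y z v =
     (fg x + transpose (Jg x) *v y + transpose (Jh x) *v z, z - v, g x, h x + s)"

definition duality :: "real^'i::finite \<Rightarrow> real^'i \<Rightarrow> real" where
  "duality s v = (s \<bullet> v) / real CARD('i)"

definition condensed ::
  "real^'n^'n \<Rightarrow> real^'n^'e \<Rightarrow> real^'n^'i \<Rightarrow> real^'i \<Rightarrow> real^'i \<Rightarrow> real \<Rightarrow> real^'n^'n"
  where "condensed W G H s v \<gamma> =
     W + transpose H ** diagm (\<chi> i. v$i / s$i) ** H + \<gamma> *\<^sub>R (transpose G ** G)"

definition rowspaceA :: "'i set \<Rightarrow> real^'n^'i \<Rightarrow> real^'n^'e \<Rightarrow> (real^'n) set" where
  "rowspaceA B H G = span ({H$i | i. i \<in> B} \<union> {G$j | j. True})"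

definition nullspaceA :: "'i set \<Rightarrow> real^'n^'i \<Rightarrow> real^'n^'e \<Rightarrow> (real^'n) set" where
  "nullspaceA B H G = {d. (\<forall>i\<in>B. H$i \<bullet> d = 0) \<and> G *v d = 0}"

end

theory Submission
  imports Defs
begin



definition mn :: "real^'a^'b \<Rightarrow> real" where
  "mn M = (\<Sum>i\<in>UNIV. \<Sum>j\<in>UNIV. \<bar>M$i$j\<bar>)"

lemma mn_nonneg: "0 \<le> mn M"
  unfolding mn_def by (intro sum_nonneg) auto

lemma entry_le_mn: "\<bar>M$i$j\<bar> \<le> mn M"
proof -
  have "\<bar>M$i$j\<bar> \<le> (\<Sum>j\<in>UNIV. \<bar>M$i$j\<bar>)"
    by (rule member_le_sum) auto
  also have "\<dots> \<le> mn M" unfolding mn_def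
    by (rule member_le_sum[where f="\<lambda>i. \<Sum>j\<in>UNIV. \<bar>M$i$j\<bar>"]) (auto intro: sum_nonneg)
  finally show ?thesis .
qed

lemma mn_add: "mn (A + B) \<le> mn A + mn B"
  unfolding mn_def by (simp add: sum.distrib[symmetric] sum_mono abs_triangle_ineq)

lemma mn_diff: "mn (A - B) \<le> mn A + mn B"
  unfolding mn_def by (simp add: sum.distrib[symmetric] sum_mono abs_triangle_ineq4)

lemma mn_uminus: "mn (- A) = mn A"
  unfolding mn_def by simp

lemma mn_transpose: "mn (transpose A) = mn A"
  unfolding mn_def transpose_def by simp (rule sum.swap)

lemma row_le_mn: "(\<Sum>k\<in>UNIV. \<bar>M$j$k\<bar>) \<le> mn M"
  unfolding mn_def
  by (rule member_le_sum[where f="\<lambda>i. \<Sum>j\<in>UNIV. \<bar>M$i$j\<bar>"]) (auto intro: sum_nonneg)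

lemma mn_mult: "mn (A ** B) \<le> mn A * mn B"
proof -
  have "mn (A ** B) = (\<Sum>i\<in>UNIV. \<Sum>k\<in>UNIV. \<bar>\<Sum>j\<in>UNIV. A$i$j * B$j$k\<bar>)"
    unfolding mn_def matrix_matrix_mult_def by simp
  also have "\<dots> \<le> (\<Sum>i\<in>UNIV. \<Sum>k\<in>UNIV. \<Sum>j\<in>UNIV. \<bar>A$i$j\<bar> * \<bar>B$j$k\<bar>)"
    by (intro sum_mono) (metis (no_types, lifting) abs_mult sum.cong sum_abs)
  also have "\<dots> = (\<Sum>i\<in>UNIV. \<Sum>j\<in>UNIV. \<Sum>k\<in>UNIV. \<bar>A$i$j\<bar> * \<bar>B$j$k\<bar>)"
    by (intro sum.cong refl) (rule sum.swap)
  also have "\<dots> = (\<Sum>i\<in>UNIV. \<Sum>j\<in>UNIV. \<bar>A$i$j\<bar> * (\<Sum>k\<in>UNIV. \<bar>B$j$k\<bar>))"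
    by (simp add: sum_distrib_left)
  also have "\<dots> \<le> (\<Sum>i\<in>UNIV. \<Sum>j\<in>UNIV. \<bar>A$i$j\<bar> * mn B)"
    by (intro sum_mono mult_left_mono) (auto simp: row_le_mn)
  also have "\<dots> = mn A * mn B"
    by (simp add: mn_def sum_distrib_right)
  finally show ?thesis .
qed

lemma norm_le_mn: "norm M \<le> mn M"
proof -
  have "norm M \<le> (\<Sum>i\<in>UNIV. norm (M$i))"
    unfolding norm_vec_def by (rule L2_set_le_sum) auto
  also have "\<dots> \<le> mn M" unfolding mn_def
    by (intro sum_mono norm_le_l1_cart)
  finally show ?thesis .
qed

lemma mn_le_norm: "mn (M::real^'a^'b) \<le> real CARD('b) * real CARD('a) * norm M"
proof -
  have "mn M \<le> (\<Sum>i\<in>(UNIV::'b set). \<Sum>j\<in>(UNIV::'a set). norm M)"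
    unfolding mn_def
    by (intro sum_mono) (rule order_trans[OF component_le_norm_cart Finite_Cartesian_Product.norm_nth_le])
  then show ?thesis by simp
qed

lemma aux3: "\<bar>(u::real^'a)$i * m * (w::real^'b)$j\<bar> \<le> \<bar>m\<bar> * (norm u * norm w)" for m
proof -
  have "\<bar>u$i\<bar> * \<bar>w$j\<bar> \<le> norm u * norm w"
    by (intro mult_mono component_le_norm_cart) auto
  then have "\<bar>m\<bar> * (\<bar>u$i\<bar> * \<bar>w$j\<bar>) \<le> \<bar>m\<bar> * (norm u * norm w)"
    by (simp add: mult_left_mono)
  then show ?thesis by (simp add: abs_mult mult_ac)
qed

lemma quad_le: "\<bar>u \<bullet> (M *v w)\<bar> \<le> mn M * norm u * norm w"
proof -
  have "u \<bullet> (M *v w) = (\<Sum>i\<in>UNIV. \<Sum>j\<in>UNIV. u$i * M$i$j * w$j)"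
    unfolding inner_vec_def matrix_vector_mult_def by (simp add: sum_distrib_left mult.assoc)
  also have "\<bar>\<dots>\<bar> \<le> (\<Sum>i\<in>UNIV. \<Sum>j\<in>UNIV. \<bar>M$i$j\<bar> * (norm u * norm w))"
    by (rule order_trans[OF sum_abs], rule sum_mono, rule order_trans[OF sum_abs], rule sum_mono)
       (rule aux3)
  also have "\<dots> = mn M * norm u * norm w"
    by (simp add: mn_def sum_distrib_right mult.assoc)
  finally show ?thesis .
qed

lemma norm_column_le: "norm (column j M) \<le> mn M"
proof -
  have "norm (column j M) \<le> (\<Sum>i\<in>UNIV. \<bar>M$i$j\<bar>)"
    using norm_le_l1_cart[of "column j M"] by (simp add: column_def)
  also have "\<dots> \<le> mn M" unfolding mn_def
    by (intro sum_mono member_le_sum) auto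
  finally show ?thesis .
qed




lemma span_image_coeffs:
  fixes f :: "'a \<Rightarrow> 'v::real_vector"
  assumes "finite I"
  shows "v \<in> span (f ` I \<union> T) \<Longrightarrow> \<exists>c. v - (\<Sum>i\<in>I. c i *\<^sub>R f i) \<in> span T"
  using assms
proof (induction I arbitrary: v rule: finite_induct)
  case empty
  then show ?case by simp
next
  case (insert a I)
  have "f ` insert a I \<union> T = insert (f a) (f ` I \<union> T)" by auto
  with insert.prems obtain k where k: "v - k *\<^sub>R f a \<in> span (f ` I \<union> T)"
    using span_breakdown_eq by metis
  from insert.IH[OF k] obtain c where c: "v - k *\<^sub>R f a - (\<Sum>i\<in>I. c i *\<^sub>R f i) \<in> span T" by blast
  have "(\<Sum>i\<in>insert a I. (c(a := k)) i *\<^sub>R f i) = k *\<^sub>R f a + (\<Sum>i\<in>I. c i *\<^sub>R f i)"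
    using insert.hyps by (simp add: sum.insert) (intro sum.cong, auto)
  then show ?case using c by (intro exI[of _ "c(a := k)"]) (simp add: algebra_simps)
qed

lemma sum_prod_le:
  fixes a t :: "'a \<Rightarrow> real"
  assumes "finite I"
  shows "\<bar>\<Sum>i\<in>I. a i * t i\<bar> \<le> (\<Sum>i\<in>I. \<bar>a i\<bar>) * (\<Sum>i\<in>I. \<bar>t i\<bar>)"
proof -
  have "\<bar>\<Sum>i\<in>I. a i * t i\<bar> \<le> (\<Sum>i\<in>I. \<bar>a i\<bar> * \<bar>t i\<bar>)"
    by (rule order_trans[OF sum_abs]) (simp add: abs_mult)
  also have "\<dots> \<le> (\<Sum>i\<in>I. \<bar>a i\<bar> * (\<Sum>i\<in>I. \<bar>t i\<bar>))"
    by (intro sum_mono mult_left_mono member_le_sum assms) auto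
  also have "\<dots> = (\<Sum>i\<in>I. \<bar>a i\<bar>) * (\<Sum>i\<in>I. \<bar>t i\<bar>)"
    by (simp add: sum_distrib_right)
  finally show ?thesis .
qed

definition rcomb :: "'i set \<Rightarrow> real^'n^'i \<Rightarrow> real^'n^'e \<Rightarrow> ('i \<Rightarrow> real) \<Rightarrow> ('e \<Rightarrow> real) \<Rightarrow> real^'n"
  where "rcomb B H G a b = (\<Sum>i\<in>B. a i *\<^sub>R H$i) + (\<Sum>j\<in>UNIV. b j *\<^sub>R G$j)"

definition l1c :: "'i set \<Rightarrow> ('i \<Rightarrow> real) \<Rightarrow> ('e::finite \<Rightarrow> real) \<Rightarrow> real"
  where "l1c B a b = (\<Sum>i\<in>B. \<bar>a i\<bar>) + (\<Sum>j\<in>UNIV. \<bar>b j\<bar>)"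

definition Ax :: "'i set \<Rightarrow> real^'n^'i \<Rightarrow> real^'n^'e \<Rightarrow> real^'n \<Rightarrow> real"
  where "Ax B H G u = (\<Sum>i\<in>B. \<bar>H$i \<bullet> u\<bar>) + (\<Sum>j\<in>UNIV. \<bar>G$j \<bullet> u\<bar>)"

lemma rcomb_inner: "rcomb B H G a b \<bullet> u = (\<Sum>i\<in>B. a i * (H$i \<bullet> u)) + (\<Sum>j\<in>UNIV. b j * (G$j \<bullet> u))"
  unfolding rcomb_def by (simp add: inner_add_left inner_sum_left)

lemma rcomb_inner_le:
  fixes B :: "'i::finite set"
  shows "\<bar>rcomb B H G a b \<bullet> u\<bar> \<le> l1c B a b * Ax B H G u"
proof -
  have f: "finite B" by simp
  have "\<bar>rcomb B H G a b \<bullet> u\<bar> \<le> \<bar>\<Sum>i\<in>B. a i * (H$i \<bullet> u)\<bar> + \<bar>\<Sum>j\<in>UNIV. b j * (G$j \<bullet> u)\<bar>"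
    unfolding rcomb_inner by (rule abs_triangle_ineq)
  also have "\<dots> \<le> (\<Sum>i\<in>B. \<bar>a i\<bar>) * (\<Sum>i\<in>B. \<bar>H$i \<bullet> u\<bar>) + (\<Sum>j\<in>UNIV. \<bar>b j\<bar>) * (\<Sum>j\<in>UNIV. \<bar>G$j \<bullet> u\<bar>)"
    by (intro add_mono sum_prod_le f) simp
  also have "\<dots> \<le> l1c B a b * Ax B H G u"
    unfolding l1c_def Ax_def by (simp add: algebra_simps add_mono mult_left_mono sum_nonneg)
  finally show ?thesis .
qed

lemma nullspace_Ax: "\<nu> \<in> nullspaceA B H G \<Longrightarrow> Ax B H G \<nu> = 0"
  unfolding nullspaceA_def Ax_def
  by (auto simp: vec_eq_iff matrix_vector_mult_def inner_vec_def mult.commute)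

lemma null_rows: assumes "\<nu> \<in> nullspaceA B H G"
  shows "\<forall>i\<in>B. H$i \<bullet> \<nu> = 0" "\<forall>j. G$j \<bullet> \<nu> = 0"
  using assms unfolding nullspaceA_def
  by (auto simp: vec_eq_iff matrix_vector_mult_def inner_vec_def mult.commute)

lemma Ax_add_null: "\<nu> \<in> nullspaceA B H G \<Longrightarrow> Ax B H G (\<rho> + \<nu>) = Ax B H G \<rho>"
  using null_rows[of \<nu> B H G] unfolding Ax_def
  by (simp add: inner_add_right)

lemma decomp:
  fixes B :: "'i::finite set" and H :: "real^'n::finite^'i" and G :: "real^'n^'e::finite"
  assumes c: "c > 0" and riesz: "\<And>a b. c * l1c B a b \<le> norm (rcomb B H G a b)"
  obtains \<rho> \<nu> where "u = \<rho> + \<nu>" "\<nu> \<in> nullspaceA B H G" "\<rho> \<bullet> \<nu> = 0"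
    "c * norm \<rho> \<le> Ax B H G u"
proof -
  let ?R = "(\<lambda>i. H$i) ` B \<union> (\<lambda>j. G$j) ` UNIV"
  obtain y z where y: "y \<in> span ?R" and z: "\<And>w. w \<in> span ?R \<Longrightarrow> orthogonal z w" and u: "u = y + z"
    using orthogonal_subspace_decomp_exists by metis
  have zn: "z \<in> nullspaceA B H G"
  proof -
    have "\<forall>i\<in>B. H$i \<bullet> z = 0"
    proof
      fix i assume "i \<in> B"
      then have "H$i \<in> span ?R" by (intro span_base) auto
      then show "H$i \<bullet> z = 0" using z by (simp add: orthogonal_def inner_commute[of _ z])
    qed
    moreover have "G *v z = 0"
    proof -
      have "G$j \<bullet> z = 0" for j
      proof -
        have "G$j \<in> span ?R" by (intro span_base) auto
        then show "G$j \<bullet> z = 0" using z by (simp add: orthogonal_def inner_commute[of _ z])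
      qed
      then show ?thesis by (simp add: vec_eq_iff matrix_vector_mult_def inner_vec_def mult.commute)
    qed
    ultimately show ?thesis unfolding nullspaceA_def by blast
  qed
  have yz: "y \<bullet> z = 0" using z[OF y] by (simp add: orthogonal_def inner_commute)
  obtain a where a: "y - (\<Sum>i\<in>B. a i *\<^sub>R H$i) \<in> span ((\<lambda>j. G$j) ` UNIV)"
    using span_image_coeffs[of B y "\<lambda>i. H$i" "(\<lambda>j. G$j) ` UNIV"] y by auto
  obtain b where b: "y - (\<Sum>i\<in>B. a i *\<^sub>R H$i) - (\<Sum>j\<in>UNIV. b j *\<^sub>R G$j) \<in> span {}"
    using span_image_coeffs[of UNIV _ "\<lambda>j. G$j" "{}"] a by auto
  have yr: "y = rcomb B H G a b" using b unfolding rcomb_def by (simp add: algebra_simps)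
  have "norm y ^ 2 = y \<bullet> u"
    using yz u by (simp add: inner_add_right power2_norm_eq_inner)
  also have "\<dots> \<le> l1c B a b * Ax B H G u"
    using rcomb_inner_le[of B H G a b u] yr by simp
  finally have 1: "norm y ^ 2 \<le> l1c B a b * Ax B H G u" .
  have Axnn: "0 \<le> Ax B H G u" unfolding Ax_def by (auto intro: sum_nonneg add_nonneg_nonneg)
  have "c * norm y ^ 2 \<le> c * l1c B a b * Ax B H G u"
    using 1 c by (simp add: mult.assoc mult_left_mono)
  also have "\<dots> \<le> norm y * Ax B H G u"
    using riesz[of a b] yr Axnn by (simp add: mult_right_mono)
  finally have 2: "c * norm y ^ 2 \<le> norm y * Ax B H G u" .
  have "c * norm y \<le> Ax B H G u"
  proof (cases "norm y = 0")
    case True then show ?thesis using Axnn by simp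
  next
    case False
    then have "norm y > 0" by simp
    with 2 show ?thesis by (simp add: power2_eq_square mult.assoc mult.left_commute[of c])
  qed
  then show ?thesis using that[of y z] u zn yz by blast
qed




lemma rcomb_scale: "rcomb B H G (\<lambda>i. a i / t) (\<lambda>j. b j / t) = (1/t) *\<^sub>R rcomb B H G a b"
  unfolding rcomb_def by (simp add: scaleR_add_right scaleR_sum_right divide_inverse mult.commute)

lemma rcomb_cong: "(\<And>i. i \<in> B \<Longrightarrow> a i = a' i) \<Longrightarrow> rcomb B H G a b = rcomb B H G a' b"
  unfolding rcomb_def by (intro arg_cong2[where f="(+)"] sum.cong) auto

lemma riesz_exists:
  fixes H :: "real^'n::finite^'i::finite" and G :: "real^'n^'e::finite"
  assumes licq: "\<forall>a b. (\<Sum>i\<in>B. a i *\<^sub>R H$i) + (\<Sum>j\<in>UNIV. b j *\<^sub>R G$j) = 0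
                 \<longrightarrow> (\<forall>i\<in>B. a i = 0) \<and> (\<forall>j. b j = 0)"
  shows "\<exists>c>0. \<forall>a b. c * l1c B a b \<le> norm (rcomb B H G a b)"
proof -
  define lp where "lp = (\<lambda>p::(real^'i) \<times> (real^'e). (\<Sum>i\<in>B. \<bar>fst p$i\<bar>) + (\<Sum>j\<in>UNIV. \<bar>snd p$j\<bar>))"
  define S where "S = {p. lp p = 1} \<inter> (\<Inter>i\<in>-B. {p::(real^'i) \<times> (real^'e). fst p $ i = 0})"
  define F where "F = (\<lambda>p::(real^'i) \<times> (real^'e). norm (rcomb B H G (\<lambda>i. fst p$i) (\<lambda>j. snd p$j)))"
  have clp: "continuous_on UNIV lp" unfolding lp_def by (intro continuous_intros)
  have "closed S" unfolding S_def
    by (intro closed_Int closed_INT ballI closed_Collect_eq continuous_intros clp)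
  moreover have "bounded S"
  proof -
    have "norm p \<le> 1" if "p \<in> S" for p
    proof -
      have a0: "\<forall>i. i \<notin> B \<longrightarrow> fst p $ i = 0" using that unfolding S_def by auto
      have "norm p \<le> norm (fst p) + norm (snd p)" using norm_Pair_le[of "fst p" "snd p"] by simp
      also have "\<dots> \<le> (\<Sum>i\<in>UNIV. \<bar>fst p$i\<bar>) + (\<Sum>j\<in>UNIV. \<bar>snd p$j\<bar>)"
        by (intro add_mono norm_le_l1_cart)
      also have "(\<Sum>i\<in>UNIV. \<bar>fst p$i\<bar>) = (\<Sum>i\<in>B. \<bar>fst p$i\<bar>)"
        using a0 by (intro sum.mono_neutral_right) auto
      finally show ?thesis using that unfolding S_def lp_def by simp
    qed
    then show ?thesis unfolding bounded_iff by blast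
  qed
  ultimately have "compact S" using compact_eq_bounded_closed by blast
  moreover have "S \<noteq> {}"
  proof -
    have cp: "real CARD('e) > 0" by simp
    have ax: "(\<Sum>j\<in>UNIV. \<bar>(\<chi> j::'e. 1 / real CARD('e)) $ j\<bar>) = 1" using cp by simp
    have "(0, (\<chi> j::'e. 1 / real CARD('e))) \<in> S" unfolding S_def lp_def
      using ax by simp
    then show ?thesis by blast
  qed
  moreover have "continuous_on S F" unfolding F_def rcomb_def by (intro continuous_intros)
  ultimately obtain p where pS: "p \<in> S" and pmin: "\<forall>q\<in>S. F p \<le> F q"
    using continuous_attains_inf by blast
  have Fpos: "F p > 0"
  proof (rule ccontr)
    assume "\<not> F p > 0"
    then have "rcomb B H G (\<lambda>i. fst p$i) (\<lambda>j. snd p$j) = 0" unfolding F_def by simp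
    then have "(\<forall>i\<in>B. fst p$i = 0) \<and> (\<forall>j. snd p$j = 0)"
      using licq unfolding rcomb_def by blast
    then have "lp p = 0" unfolding lp_def by simp
    with pS show False unfolding S_def by simp
  qed
  have "\<forall>a b. F p * l1c B a b \<le> norm (rcomb B H G a b)"
  proof (intro allI)
    fix a b
    show "F p * l1c B a b \<le> norm (rcomb B H G a b)"
    proof (cases "l1c B a b = 0")
      case True then show ?thesis by simp
    next
      case False
      define t where "t = l1c B a b"
      have tpos: "t > 0" using False unfolding t_def l1c_def
        by (simp add: add_nonneg_nonneg sum_nonneg order_le_neq_trans)
      define q where "q = ((\<chi> i. if i \<in> B then a i / t else 0), (\<chi> j. b j / t))"
      have "lp q = ((\<Sum>i\<in>B. \<bar>a i\<bar>) + (\<Sum>j\<in>UNIV. \<bar>b j\<bar>)) / t"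
        unfolding lp_def q_def using tpos by (simp add: sum_divide_distrib add_divide_distrib)
      then have "lp q = 1" using tpos unfolding t_def l1c_def by simp
      then have qS: "q \<in> S" unfolding S_def q_def by simp
      have "F q = norm (rcomb B H G (\<lambda>i. a i / t) (\<lambda>j. b j / t))"
      proof -
        have "rcomb B H G (\<lambda>i. fst q $ i) (\<lambda>j. snd q $ j) = rcomb B H G (\<lambda>i. a i / t) (\<lambda>j. b j / t)"
          unfolding rcomb_def q_def by (intro arg_cong2[where f="(+)"] sum.cong) auto
        then show ?thesis unfolding F_def by simp
      qed
      also have "\<dots> = norm (rcomb B H G a b) / t" using tpos by (simp add: rcomb_scale)
      finally have Fq: "F q = norm (rcomb B H G a b) / t" .
      have "F p \<le> F q" using pmin qS by blast
      then have "F p \<le> norm (rcomb B H G a b) / t" using Fq by linarith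
      then show ?thesis using tpos unfolding t_def[symmetric] by (simp add: pos_le_divide_eq)
    qed
  qed
  then show ?thesis using Fpos by blast
qed

lemma rcomb_diff: "rcomb B H' G' a b = rcomb B H G a b + rcomb B (H' - H) (G' - G) a b"
  unfolding rcomb_def by (simp add: algebra_simps sum.distrib[symmetric])

lemma sum_prod_le_nn:
  fixes f g :: "'a \<Rightarrow> real"
  assumes "finite I" "\<And>i. i \<in> I \<Longrightarrow> 0 \<le> f i" "\<And>i. i \<in> I \<Longrightarrow> 0 \<le> g i"
  shows "(\<Sum>i\<in>I. f i * g i) \<le> (\<Sum>i\<in>I. f i) * (\<Sum>i\<in>I. g i)"
proof -
  have "(\<Sum>i\<in>I. f i * g i) \<le> (\<Sum>i\<in>I. f i * (\<Sum>i\<in>I. g i))"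
    using assms by (intro sum_mono mult_left_mono member_le_sum) auto
  then show ?thesis by (simp add: sum_distrib_right)
qed

lemma rcomb_small:
  fixes B :: "'i::finite set"
  shows "norm (rcomb B D E a b) \<le> l1c B a b * ((\<Sum>i\<in>B. norm (D$i)) + (\<Sum>j\<in>UNIV. norm (E$j)))"
proof -
  have "norm (rcomb B D E a b) \<le> (\<Sum>i\<in>B. \<bar>a i\<bar> * norm (D$i)) + (\<Sum>j\<in>UNIV. \<bar>b j\<bar> * norm (E$j))"
    unfolding rcomb_def
    by (rule order_trans[OF norm_triangle_ineq], intro add_mono; rule order_trans[OF norm_sum]; simp)
  also have "\<dots> \<le> (\<Sum>i\<in>B. \<bar>a i\<bar>) * (\<Sum>i\<in>B. norm (D$i)) + (\<Sum>j\<in>UNIV. \<bar>b j\<bar>) * (\<Sum>j\<in>UNIV. norm (E$j))"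
    by (intro add_mono sum_prod_le_nn) auto
  also have "\<dots> \<le> l1c B a b * ((\<Sum>i\<in>B. norm (D$i)) + (\<Sum>j\<in>UNIV. norm (E$j)))"
    unfolding l1c_def by (simp add: algebra_simps add_mono mult_left_mono sum_nonneg)
  finally show ?thesis .
qed

lemma riesz_perturb:
  fixes B :: "'i::finite set" and H :: "real^'n::finite^'i" and G :: "real^'n^'e::finite"
  assumes r: "\<forall>a b. c * l1c B a b \<le> norm (rcomb B H G a b)"
    and D: "(\<Sum>i\<in>B. norm (H'$i - H$i)) + (\<Sum>j\<in>UNIV. norm (G'$j - G$j)) \<le> c/2"
  shows "\<forall>a b. (c/2) * l1c B a b \<le> norm (rcomb B H' G' a b)"
proof (intro allI)
  fix a :: "'i \<Rightarrow> real" and b :: "'e \<Rightarrow> real"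
  have l0: "0 \<le> l1c B a b" unfolding l1c_def by (auto intro: sum_nonneg add_nonneg_nonneg)
  have "norm (rcomb B (H' - H) (G' - G) a b) \<le> l1c B a b * ((\<Sum>i\<in>B. norm (H'$i - H$i)) + (\<Sum>j\<in>UNIV. norm (G'$j - G$j)))"
    using rcomb_small[of B "H' - H" "G' - G" a b] by simp
  also have "\<dots> \<le> l1c B a b * (c/2)" using D l0 by (rule mult_left_mono)
  finally have "norm (rcomb B (H' - H) (G' - G) a b) \<le> l1c B a b * (c/2)" .
  moreover have "norm (rcomb B H G a b) \<le> norm (rcomb B H' G' a b) + norm (rcomb B (H' - H) (G' - G) a b)"
    using rcomb_diff[of B H' G' a b H G] norm_triangle_ineq4[of "rcomb B H' G' a b" "rcomb B (H' - H) (G' - G) a b"]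
    by (simp add: algebra_simps)
  ultimately show "(c/2) * l1c B a b \<le> norm (rcomb B H' G' a b)" using r[rule_format, of a b]
    by (simp add: algebra_simps)
qed

lemma Ax_perturb:
  fixes B :: "'i::finite set" and H :: "real^'n::finite^'i" and G :: "real^'n^'e::finite" and u :: "real^'n"
  shows "Ax B H G u \<le> Ax B H' G' u + ((\<Sum>i\<in>B. norm (H'$i - H$i)) + (\<Sum>j\<in>UNIV. norm (G'$j - G$j))) * norm u"
proof -
  have h: "\<bar>X \<bullet> u\<bar> \<le> \<bar>X' \<bullet> u\<bar> + norm (X' - X) * norm u" for X X' :: "real^'n"
  proof -
    have "\<bar>X \<bullet> u\<bar> \<le> \<bar>X' \<bullet> u\<bar> + \<bar>(X' - X) \<bullet> u\<bar>"
      by (simp add: inner_diff_left)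
    also have "\<bar>(X' - X) \<bullet> u\<bar> \<le> norm (X' - X) * norm u" by (rule Cauchy_Schwarz_ineq2)
    finally show ?thesis by simp
  qed
  have 1: "(\<Sum>i\<in>B. \<bar>H$i \<bullet> u\<bar>) \<le> (\<Sum>i\<in>B. \<bar>H'$i \<bullet> u\<bar> + norm (H'$i - H$i) * norm u)"
    by (rule sum_mono) (rule h)
  have 2: "(\<Sum>j\<in>UNIV. \<bar>G$j \<bullet> u\<bar>) \<le> (\<Sum>j\<in>UNIV. \<bar>G'$j \<bullet> u\<bar> + norm (G'$j - G$j) * norm u)"
    by (rule sum_mono) (rule h)
  show ?thesis using 1 2 unfolding Ax_def sum.distrib sum_distrib_right[symmetric] distrib_right
    by linarith
qed

lemma Ax_le:
  fixes B :: "'i::finite set"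
  shows "Ax B H G u \<le> ((\<Sum>i\<in>B. norm (H$i)) + (\<Sum>j\<in>UNIV. norm (G$j))) * norm u"
  unfolding Ax_def
  by (rule order_trans[OF add_mono[OF sum_mono[OF Cauchy_Schwarz_ineq2] sum_mono[OF Cauchy_Schwarz_ineq2]]])
     (simp add: sum_distrib_right distrib_right)

lemma Ax_nonneg: "0 \<le> Ax B H G u"
  unfolding Ax_def by (auto intro: sum_nonneg add_nonneg_nonneg)

lemma subspace_null: "subspace (nullspaceA B H G)"
  unfolding subspace_def nullspaceA_def
  by (auto simp: inner_add_right matrix_vector_right_distrib matrix_vector_mult_scaleR)

lemma quad_scale: fixes W :: "real^'n::finite^'n" shows "(t *\<^sub>R d) \<bullet> (W *v (t *\<^sub>R d)) = t^2 * (d \<bullet> (W *v d))"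
  by (simp add: matrix_vector_mult_scaleR power2_eq_square)

lemma sosc_const:
  fixes W :: "real^'n::finite^'n"
  assumes pos: "\<forall>d. d \<noteq> 0 \<and> d \<in> N \<longrightarrow> d \<bullet> (W *v d) > 0" and sN: "subspace N"
  shows "\<exists>\<mu>>0. \<forall>d\<in>N. \<mu> * norm d ^ 2 \<le> d \<bullet> (W *v d)"
proof -
  define S where "S = N \<inter> sphere 0 1"
  have scl: "d /\<^sub>R norm d \<in> S \<and> (d /\<^sub>R norm d) \<bullet> (W *v (d /\<^sub>R norm d)) = (d \<bullet> (W *v d)) / norm d ^ 2"
    if "d \<in> N" "d \<noteq> 0" for d
  proof
    show "d /\<^sub>R norm d \<in> S" using that sN unfolding S_def by (simp add: subspace_scale)
    show "(d /\<^sub>R norm d) \<bullet> (W *v (d /\<^sub>R norm d)) = (d \<bullet> (W *v d)) / norm d ^ 2"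
      using quad_scale[where t="inverse (norm d)" and d=d and W=W] by (simp add: power_inverse divide_inverse mult.commute)
  qed
  show ?thesis
  proof (cases "S = {}")
    case True
    then have "\<forall>d\<in>N. d = 0" using scl by blast
    then show ?thesis by (intro exI[of _ 1]) auto
  next
    case False
    have "compact S" unfolding S_def
      by (intro closed_Int_compact closed_subspace sN compact_sphere)
    moreover have "continuous_on S (\<lambda>d. d \<bullet> (W *v d))"
      by (intro continuous_intros linear_continuous_on matrix_vector_mul_linear bounded_linear_inner_right)
    ultimately obtain p where pS: "p \<in> S" and pmin: "\<forall>q\<in>S. p \<bullet> (W *v p) \<le> q \<bullet> (W *v q)"
      using continuous_attains_inf False by blast
    have "p \<noteq> 0" "p \<in> N" using pS unfolding S_def by auto
    then have mpos: "p \<bullet> (W *v p) > 0" using pos by blast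
    have "\<forall>d\<in>N. (p \<bullet> (W *v p)) * norm d ^ 2 \<le> d \<bullet> (W *v d)"
    proof
      fix d assume dN: "d \<in> N"
      show "(p \<bullet> (W *v p)) * norm d ^ 2 \<le> d \<bullet> (W *v d)"
      proof (cases "d = 0")
        case True then show ?thesis by simp
      next
        case False
        with scl[OF dN] pmin have "p \<bullet> (W *v p) \<le> (d \<bullet> (W *v d)) / norm d ^ 2" by metis
        then show ?thesis using False by (simp add: pos_le_divide_eq)
      qed
    qed
    then show ?thesis using mpos by blast
  qed
qed




lemma mm_diff_l: "(A::real^'n^'m) ** (B - C) = A ** B - A ** C"
  by (simp add: matrix_matrix_mult_def vec_eq_iff sum_subtractf right_diff_distrib)

lemma mm_diff_r: "((B::real^'n^'m) - C) ** A = B ** A - C ** A"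
  by (simp add: matrix_matrix_mult_def vec_eq_iff sum_subtractf left_diff_distrib)

lemma mm_add_r: "((B::real^'n^'m) + C) ** A = B ** A + C ** A"
  by (simp add: matrix_matrix_mult_def vec_eq_iff sum.distrib distrib_right)

lemma transpose_diff': "transpose ((A::real^'n^'m) - B) = transpose A - transpose B"
  by (simp add: transpose_def vec_eq_iff)

lemma entry_diag_mult: "(A ** diagm e ** transpose C) $ i $ k = (\<Sum>j\<in>UNIV. A$i$j * e$j * C$k$j)"
proof -
  have "(A ** diagm e) $ i $ j = A$i$j * e$j" for j
    unfolding matrix_matrix_mult_def diagm_def
    by (simp add: if_distrib[of "\<lambda>x. A$i$_ * x"] cong: if_cong)
  then show ?thesis
    by (simp add: matrix_matrix_mult_def[of "A ** diagm e"] transpose_def)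
qed

lemma diag_split:
  "Q ** diagm (\<chi> j. e j) ** transpose Q =
     colmask L Q ** diagm (\<chi> j. if j \<in> L then e j else 0) ** transpose (colmask L Q)
   + colmask (-L) Q ** diagm (\<chi> j. if j \<in> -L then e j else 0) ** transpose (colmask (-L) Q)"
  by (simp add: vec_eq_iff entry_diag_mult colmask_def sum.distrib[symmetric] if_distrib cong: if_cong)
     (intro allI sum.cong, auto)

lemma orth_cols:
  assumes "orthogonal_matrix (Q::real^'n^'n)"
  shows "column j Q \<bullet> column k Q = (if j = k then 1 else 0)"
proof -
  have "(transpose Q ** Q) $ j $ k = (if j = k then 1 else 0)"
    using assms unfolding orthogonal_matrix by (simp add: mat_def)
  then show ?thesis
    by (simp add: matrix_matrix_mult_def transpose_def column_def inner_vec_def)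
qed

lemma orth_transpose_col:
  assumes "orthogonal_matrix (Q::real^'n^'n)"
  shows "transpose Q *v column k Q = axis k 1"
  using orth_cols[OF assms]
  by (simp add: vec_eq_iff matrix_vector_mult_def transpose_def column_def inner_vec_def axis_def mult.commute)

lemma sum_delta_mult: fixes i :: "'n::finite" shows "(\<Sum>j\<in>UNIV. (if i = j then a else 0) * b j) = a * (b i :: real)"
proof -
  have "(\<Sum>j\<in>UNIV. (if i = j then a else 0) * b j) = (\<Sum>j\<in>UNIV. if i = j then a * b j else 0)"
    by (rule sum.cong) auto
  also have "\<dots> = a * b i" by (simp add: sum.delta)
  finally show ?thesis .
qed

lemma diagm_mv: "diagm d *v x = (\<chi> i. d$i * x$i)"
  by (simp add: vec_eq_iff matrix_vector_mult_def diagm_def sum_delta_mult)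

lemma diagm_axis: "diagm d *v axis k 1 = d$k *\<^sub>R axis k 1"
  by (simp add: diagm_mv vec_eq_iff axis_def)

lemma mat_axis_col: "(Q::real^'n^'m) *v axis k 1 = column k Q"
  by (simp add: vec_eq_iff matrix_vector_mult_def axis_def column_def if_distrib cong: if_cong)

lemma eig_col:
  assumes "orthogonal_matrix (Q::real^'n^'n)"
  shows "(Q ** diagm d ** transpose Q) *v column k Q = d$k *\<^sub>R column k Q"
proof -
  have "(Q ** diagm d ** transpose Q) *v column k Q = Q *v (diagm d *v (transpose Q *v column k Q))"
    by (metis matrix_vector_mul_assoc)
  also have "\<dots> = Q *v (diagm d *v axis k 1)"
    by (simp only: orth_transpose_col[OF assms])
  also have "\<dots> = Q *v (d$k *\<^sub>R axis k 1)"
    by (simp only: diagm_axis)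
  also have "\<dots> = d$k *\<^sub>R column k Q"
    by (simp only: matrix_vector_mult_scaleR mat_axis_col)
  finally show ?thesis .
qed

lemma eig_quad:
  assumes "orthogonal_matrix (Q::real^'n^'n)"
  shows "column k Q \<bullet> ((Q ** diagm d ** transpose Q) *v column k Q) = d$k"
  using eig_col[OF assms] orth_cols[OF assms, of k k] by simp

lemma diagm_mult: "diagm d ** diagm e = diagm (\<chi> j. d$j * e$j)"
  unfolding vec_eq_iff matrix_matrix_mult_def
  by (simp add: diagm_def sum_delta_mult[where b="\<lambda>k. if k = _ then e$k else 0"])

lemma diagm_one: "diagm (\<chi> j. 1) = mat 1"
  by (simp add: vec_eq_iff diagm_def mat_def)

lemma inv_spectral:
  fixes Q :: "real^'n^'n"
  assumes Q: "orthogonal_matrix Q" and d: "\<forall>j. d$j \<noteq> 0"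
  defines "K \<equiv> Q ** diagm d ** transpose Q"
  defines "Ki \<equiv> Q ** diagm (\<chi> j. 1 / d$j) ** transpose Q"
  shows "invertible K" "matrix_inv K = Ki"
proof -
  have Q1: "transpose Q ** Q = mat 1" "Q ** transpose Q = mat 1"
    using Q unfolding orthogonal_matrix_def by auto
  have de: "diagm d ** diagm (\<chi> j. 1 / d$j) = mat 1" "diagm (\<chi> j. 1 / d$j) ** diagm d = mat 1"
    using d by (simp_all add: diagm_mult diagm_one[symmetric])
  have "K ** Ki = Q ** diagm d ** (transpose Q ** Q) ** diagm (\<chi> j. 1 / d$j) ** transpose Q"
    unfolding K_def Ki_def by (simp add: matrix_mul_assoc)
  also have "\<dots> = Q ** (diagm d ** diagm (\<chi> j. 1 / d$j)) ** transpose Q"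
    by (simp add: Q1 matrix_mul_assoc)
  also have "\<dots> = mat 1" by (simp add: de Q1)
  finally have 1: "K ** Ki = mat 1" .
  have "Ki ** K = Q ** diagm (\<chi> j. 1 / d$j) ** (transpose Q ** Q) ** diagm d ** transpose Q"
    unfolding K_def Ki_def by (simp add: matrix_mul_assoc)
  also have "\<dots> = Q ** (diagm (\<chi> j. 1 / d$j) ** diagm d) ** transpose Q"
    by (simp add: Q1 matrix_mul_assoc)
  also have "\<dots> = mat 1" by (simp add: de Q1)
  finally have 2: "Ki ** K = mat 1" .
  show "invertible K" using 1 2 unfolding invertible_def by blast
  have "K ** matrix_inv K = mat 1 \<and> matrix_inv K ** K = mat 1"
    unfolding matrix_inv_def using someI[of "\<lambda>A'. K ** A' = mat 1 \<and> A' ** K = mat 1" Ki] 1 2 by blast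
  then have "matrix_inv K = matrix_inv K ** (K ** Ki)" using 1 by simp
  also have "\<dots> = Ki" using \<open>K ** matrix_inv K = mat 1 \<and> matrix_inv K ** K = mat 1\<close>
    by (simp add: matrix_mul_assoc)
  finally show "matrix_inv K = Ki" .
qed




lemma inner_transpose: "(q::real^'n) \<bullet> (transpose (H::real^'n^'m) *v x) = (H *v q) \<bullet> x"
proof -
  have "q \<bullet> (transpose H *v x) = (\<Sum>a\<in>UNIV. \<Sum>i\<in>UNIV. q$a * H$i$a * x$i)"
    unfolding inner_vec_def matrix_vector_mult_def transpose_def
    by (simp add: sum_distrib_left mult.assoc)
  also have "\<dots> = (\<Sum>i\<in>UNIV. \<Sum>a\<in>UNIV. q$a * H$i$a * x$i)" by (rule sum.swap)
  also have "\<dots> = (H *v q) \<bullet> x"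
    unfolding inner_vec_def matrix_vector_mult_def
    by (simp add: sum_distrib_left mult_ac)
  finally show ?thesis .
qed

lemma mv_row: "((H::real^'n^'m) *v q) $ i = H$i \<bullet> q"
  by (simp add: matrix_vector_mult_def inner_vec_def mult.commute)

lemma quad_HDH: "(q::real^'n) \<bullet> ((transpose (H::real^'n^'m) ** diagm w ** H) *v q) = (\<Sum>i\<in>UNIV. w$i * (H$i \<bullet> q)^2)"
proof -
  have "(transpose H ** diagm w ** H) *v q = transpose H *v (diagm w *v (H *v q))"
    by (metis matrix_vector_mul_assoc)
  then have "q \<bullet> ((transpose H ** diagm w ** H) *v q) = (H *v q) \<bullet> (diagm w *v (H *v q))"
    by (simp only: inner_transpose)
  also have "\<dots> = (\<Sum>i\<in>UNIV. w$i * (H$i \<bullet> q)^2)"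
    by (simp add: inner_vec_def diagm_mv mv_row power2_eq_square mult_ac)
  finally show ?thesis .
qed

lemma quad_GG: "(q::real^'n) \<bullet> ((transpose (G::real^'n^'m) ** G) *v q) = (\<Sum>i\<in>UNIV. (G$i \<bullet> q)^2)"
proof -
  have "(transpose G ** G) *v q = transpose G *v (G *v q)"
    by (metis matrix_vector_mul_assoc)
  then have "q \<bullet> ((transpose G ** G) *v q) = (G *v q) \<bullet> (G *v q)"
    by (simp only: inner_transpose)
  then show ?thesis by (simp add: inner_vec_def mv_row power2_eq_square)
qed

lemma quad_condensed:
  "(q::real^'n) \<bullet> (condensed W G H s v \<gamma> *v q)
   = q \<bullet> (W *v q) + (\<Sum>i\<in>UNIV. (v$i / s$i) * (H$i \<bullet> q)^2) + \<gamma> * (\<Sum>j\<in>UNIV. (G$j \<bullet> q)^2)"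
proof -
  have "condensed W G H s v \<gamma> *v q = W *v q + (transpose H ** diagm (\<chi> i. v$i / s$i) ** H) *v q
          + \<gamma> *\<^sub>R ((transpose G ** G) *v q)"
    unfolding condensed_def by (simp add: matrix_vector_mult_add_rdistrib scaleR_matrix_vector_assoc)
  then show ?thesis
    by (simp add: inner_add_right quad_HDH quad_GG)
qed

lemma col_unit: "orthogonal_matrix (Q::real^'n^'n) \<Longrightarrow> norm (column j Q) = 1"
  using orth_cols[of Q j j] by (simp add: norm_eq_1)

lemma S_part:
  fixes Q W Ws K :: "real^'n::finite^'n" and H Hs :: "real^'n^'i::finite" and G Gs :: "real^'n^'e::finite"
    and B :: "'i set"
  assumes c0: "c0 > 0" and rs: "\<forall>a b. c0 * l1c B a b \<le> norm (rcomb B Hs Gs a b)"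
    and mu: "\<mu>0 > 0" and sosc: "\<forall>u\<in>nullspaceA B Hs Gs. \<mu>0 * norm u ^ 2 \<le> u \<bullet> (Ws *v u)"
    and Q: "orthogonal_matrix Q" and Kdef: "K = Q ** diagm d ** transpose Q"
    and KW: "\<forall>q. q \<bullet> (W *v q) \<le> q \<bullet> (K *v q)"
    and zN: "z \<in> nullspaceA B H G" and qz: "norm (column j Q - z) \<le> E"
    and Ab: "(\<Sum>i\<in>B. norm (H$i)) + (\<Sum>j\<in>UNIV. norm (G$j)) \<le> Abar"
    and Dx: "(\<Sum>i\<in>B. norm (H$i - Hs$i)) + (\<Sum>j\<in>UNIV. norm (G$j - Gs$j)) \<le> D"
    and eta: "(Abar * E + D) / c0 \<le> \<eta>" and eta1: "\<eta> \<le> 1"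
    and small: "(2*\<mu>0 + 3 * mn Ws) * \<eta> \<le> \<mu>0/4" and om: "mn (W - Ws) \<le> \<mu>0/4"
  shows "d$j \<ge> \<mu>0/2"
proof -
  define q where "q = column j Q"
  have nq: "norm q = 1" unfolding q_def using col_unit[OF Q] .
  have A1: "Ax B H G q = Ax B H G (q - z)"
    using Ax_add_null[OF zN, of "q - z"] by simp
  have AbHG0: "0 \<le> (\<Sum>i\<in>B. norm (H$i)) + (\<Sum>j\<in>UNIV. norm (G$j))"
    by (intro add_nonneg_nonneg sum_nonneg) auto
  have A2: "Ax B H G (q - z) \<le> Abar * E"
    using Ax_le[of B H G "q - z"] qz Ab AbHG0 unfolding q_def
    by (meson mult_mono norm_ge_zero order_trans)
  have A3: "Ax B Hs Gs q \<le> Abar * E + D"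
  proof -
    have "Ax B Hs Gs q \<le> Ax B H G q + ((\<Sum>i\<in>B. norm (H$i - Hs$i)) + (\<Sum>j\<in>UNIV. norm (G$j - Gs$j))) * norm q"
      by (rule Ax_perturb)
    then show ?thesis using A1 A2 Dx nq by simp
  qed
  obtain \<rho> \<nu> where qd: "q = \<rho> + \<nu>" and \<nu>N: "\<nu> \<in> nullspaceA B Hs Gs" and cr: "c0 * norm \<rho> \<le> Ax B Hs Gs q"
    using decomp[OF c0, of B Hs Gs q] rs by blast
  have r\<eta>: "norm \<rho> \<le> \<eta>"
  proof -
    have "norm \<rho> \<le> (Abar * E + D) / c0" using cr A3 c0 by (simp add: pos_le_divide_eq mult.commute)
    then show ?thesis using eta by linarith
  qed
  have e0: "0 \<le> \<eta>" using r\<eta> norm_ge_zero order_trans by blast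
  have nu1: "norm \<nu> \<le> 1 + \<eta>" using qd nq r\<eta> norm_triangle_ineq4[of q \<rho>] by (simp add: algebra_simps)
  have nu2: "1 - \<eta> \<le> norm \<nu>" using qd nq r\<eta> norm_triangle_ineq[of \<rho> \<nu>] by simp
  have "(1 - \<eta>)^2 \<le> norm \<nu> ^ 2" using nu2 eta1 by (intro power_mono) auto
  then have "\<mu>0 * (1 - \<eta>)^2 \<le> \<mu>0 * norm \<nu> ^ 2" using mu by simp
  also have "\<dots> \<le> \<nu> \<bullet> (Ws *v \<nu>)" using sosc \<nu>N by blast
  finally have V1: "\<mu>0 * (1 - \<eta>)^2 \<le> \<nu> \<bullet> (Ws *v \<nu>)" .
  have V2': "\<mu>0 * (1 - 2*\<eta>) \<le> \<mu>0 * (1 - \<eta>)^2"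
    using mu by (intro mult_left_mono) (auto simp: power2_eq_square algebra_simps)
  have V2: "\<mu>0 - 2 * (\<mu>0 * \<eta>) \<le> \<mu>0 * (1 - \<eta>)^2" using V2' by (simp add: algebra_simps)
  have exp: "q \<bullet> (Ws *v q) = \<nu> \<bullet> (Ws *v \<nu>) + \<rho> \<bullet> (Ws *v q) + \<nu> \<bullet> (Ws *v \<rho>)"
    unfolding qd by (simp add: inner_add_left inner_add_right matrix_vector_right_distrib)
  have mW0: "0 \<le> mn Ws" by (rule mn_nonneg)
  have T1: "\<bar>\<rho> \<bullet> (Ws *v q)\<bar> \<le> mn Ws * \<eta>"
  proof -
    have "\<bar>\<rho> \<bullet> (Ws *v q)\<bar> \<le> mn Ws * norm \<rho> * norm q" by (rule quad_le)
    also have "\<dots> = mn Ws * norm \<rho>" using nq by simp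
    also have "\<dots> \<le> mn Ws * \<eta>" using r\<eta> mW0 by (rule mult_left_mono)
    finally show ?thesis .
  qed
  have T2: "\<bar>\<nu> \<bullet> (Ws *v \<rho>)\<bar> \<le> mn Ws * (2 * \<eta>)"
  proof -
    have "\<bar>\<nu> \<bullet> (Ws *v \<rho>)\<bar> \<le> mn Ws * norm \<nu> * norm \<rho>" by (rule quad_le)
    also have "\<dots> \<le> mn Ws * 2 * \<eta>"
      using nu1 eta1 r\<eta> mW0 e0 by (intro mult_mono) auto
    finally show ?thesis by simp
  qed
  have T3: "\<bar>q \<bullet> ((W - Ws) *v q)\<bar> \<le> \<mu>0/4"
    using quad_le[of q "W - Ws" q] nq om by simp
  have T4: "q \<bullet> (W *v q) = q \<bullet> (Ws *v q) + q \<bullet> ((W - Ws) *v q)"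
    by (simp add: matrix_vector_mult_diff_rdistrib inner_diff_right)
  have dj: "d$j = q \<bullet> (K *v q)" unfolding q_def Kdef using eig_quad[OF Q] by simp
  have "q \<bullet> (W *v q) \<le> q \<bullet> (K *v q)" using KW by blast
  have sm: "2 * (\<mu>0 * \<eta>) + 3 * (mn Ws * \<eta>) \<le> \<mu>0/4" using small by (simp add: algebra_simps)
  have T2': "\<bar>\<nu> \<bullet> (Ws *v \<rho>)\<bar> \<le> 2 * (mn Ws * \<eta>)" using T2 by (simp add: algebra_simps)
  show ?thesis using dj \<open>q \<bullet> (W *v q) \<le> q \<bullet> (K *v q)\<close> V1 V2 exp T1 T2' T3 T4 sm
    by linarith
qed




lemma abs_le_sqrt_sum:
  assumes "finite I" "k \<in> I" "\<And>i. i \<in> I \<Longrightarrow> 0 \<le> f i" "S \<ge> (\<Sum>i\<in>I. f i)"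
    "f k = t^2"
  shows "\<bar>t\<bar> \<le> sqrt S"
proof -
  have "t^2 \<le> S" using member_le_sum[of k I f] assms by force
  then show ?thesis using real_sqrt_le_mono[of "t^2" S] by simp
qed

lemma L_part:
  fixes Q W K Z :: "real^'n::finite^'n" and H :: "real^'n^'i::finite" and G :: "real^'n^'e::finite"
    and B :: "'i set" and L :: "'n set"
  assumes c: "c > 0" and r: "\<forall>a b. c * l1c B a b \<le> norm (rcomb B H G a b)"
    and Q: "orthogonal_matrix Q" and Kdef: "K = Q ** diagm d ** transpose Q" and iL: "i \<in> L"
    and KW: "\<forall>q. q \<bullet> (W *v q) + \<kappa> * ((\<Sum>k\<in>B. (H$k \<bullet> q)^2) + (\<Sum>k\<in>UNIV. (G$k \<bullet> q)^2)) \<le> q \<bullet> (K *v q)"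
    and k0: "\<kappa> \<ge> 0"
    and Zspan: "nullspaceA B H G \<subseteq> span ((\<lambda>j. column j Z) ` (-L))"
    and Zorth: "\<forall>j\<in>-L. \<forall>k\<in>-L. column j Z \<bullet> column k Z = (if j = k then 1 else 0)"
    and QZ: "\<forall>j\<in>-L. norm (column j Q - column j Z) \<le> E" and E: "real CARD('n) * E \<le> 1/2" and E0: "E \<ge> 0"
    and Wb: "mn W \<le> Wb"
  shows "d$i \<ge> \<kappa> * (c / (2 * (real (card B) + real CARD('e))))^2 - Wb"
proof -
  define q where "q = column i Q"
  have nq: "norm q = 1" unfolding q_def using col_unit[OF Q] .
  obtain \<rho> \<nu> where qd: "q = \<rho> + \<nu>" and \<nu>N: "\<nu> \<in> nullspaceA B H G" and ort: "\<rho> \<bullet> \<nu> = 0"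
    and cr: "c * norm \<rho> \<le> Ax B H G q"
    using decomp[OF c, of B H G q] r by blast
  have "\<nu> \<in> span ((\<lambda>j. column j Z) ` (-L) \<union> {})" using Zspan \<nu>N by auto
  then obtain cf where "\<nu> - (\<Sum>j\<in>-L. cf j *\<^sub>R column j Z) \<in> span {}"
    using span_image_coeffs[of "-L" \<nu> "\<lambda>j. column j Z" "{}"] by auto
  then have \<nu>s: "\<nu> = (\<Sum>j\<in>-L. cf j *\<^sub>R column j Z)" by simp
  have cfj: "column j Z \<bullet> \<nu> = cf j" if "j \<in> -L" for j
  proof -
    have "column j Z \<bullet> \<nu> = (\<Sum>k\<in>-L. cf k * (column j Z \<bullet> column k Z))"
      unfolding \<nu>s by (simp add: inner_sum_right)
    also have "\<dots> = (\<Sum>k\<in>-L. if j = k then cf k else 0)"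
      using Zorth that by (intro sum.cong) auto
    also have "\<dots> = cf j" using that by simp
    finally show ?thesis .
  qed
  have zn: "norm (column j Z) = 1" if "j \<in> -L" for j
    using Zorth that by (simp add: norm_eq_1)
  have cfb: "\<bar>cf j\<bar> \<le> norm \<nu>" if "j \<in> -L" for j
    using cfj[OF that] Cauchy_Schwarz_ineq2[of "column j Z" \<nu>] zn[OF that] by simp
  have qq: "column j Q \<bullet> q = 0" if "j \<in> -L" for j
    using orth_cols[OF Q, of j i] that iL unfolding q_def by auto
  have "\<nu> \<bullet> q = (\<Sum>j\<in>-L. cf j * (column j Z \<bullet> q))"
    unfolding \<nu>s by (simp add: inner_sum_left)
  also have "\<dots> = (\<Sum>j\<in>-L. cf j * ((column j Z - column j Q) \<bullet> q))"
    using qq by (intro sum.cong) (auto simp: inner_diff_left)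
  finally have nq1: "\<nu> \<bullet> q = (\<Sum>j\<in>-L. cf j * ((column j Z - column j Q) \<bullet> q))" .
  have "\<bar>\<nu> \<bullet> q\<bar> \<le> (\<Sum>j\<in>-L. \<bar>cf j * ((column j Z - column j Q) \<bullet> q)\<bar>)"
    unfolding nq1 by (rule sum_abs)
  also have "\<dots> \<le> (\<Sum>j\<in>-L. norm \<nu> * E)"
  proof (rule sum_mono)
    fix j assume j: "j \<in> -L"
    have "\<bar>(column j Z - column j Q) \<bullet> q\<bar> \<le> norm (column j Z - column j Q) * norm q"
      by (rule Cauchy_Schwarz_ineq2)
    also have "\<dots> \<le> E" using QZ j nq by (simp add: norm_minus_commute)
    finally have "\<bar>(column j Z - column j Q) \<bullet> q\<bar> \<le> E" .
    then show "\<bar>cf j * ((column j Z - column j Q) \<bullet> q)\<bar> \<le> norm \<nu> * E"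
      unfolding abs_mult using cfb[OF j] by (intro mult_mono) auto
  qed
  also have "\<dots> = real (card (-L)) * (norm \<nu> * E)" by simp
  also have "\<dots> \<le> real CARD('n) * (norm \<nu> * E)"
  proof -
    have "card (-L) \<le> CARD('n)" by (rule card_mono) auto
    moreover have "0 \<le> norm \<nu> * E" using E0 by simp
    ultimately show ?thesis by (intro mult_right_mono) auto
  qed
  finally have nb: "\<bar>\<nu> \<bullet> q\<bar> \<le> real CARD('n) * (norm \<nu> * E)" .
  have "norm \<nu> ^ 2 = \<nu> \<bullet> q"
    unfolding qd using ort by (simp add: inner_add_right power2_norm_eq_inner inner_commute)
  then have "norm \<nu> * norm \<nu> \<le> norm \<nu> * (real CARD('n) * E)" using nb
    by (simp add: power2_eq_square mult_ac)
  then have n\<nu>: "norm \<nu> \<le> 1/2"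
    using E by (cases "norm \<nu> = 0") (auto simp: mult_le_cancel_left)
  have n\<rho>: "norm \<rho> \<ge> 1/2" using qd nq n\<nu> norm_triangle_ineq[of \<rho> \<nu>] by simp
  have "c * (1/2) \<le> c * norm \<rho>" using n\<rho> c by (intro mult_left_mono) auto
  then have Axb: "Ax B H G q \<ge> c / 2" using cr by simp
  define SS where "SS = (\<Sum>k\<in>B. (H$k \<bullet> q)^2) + (\<Sum>k\<in>UNIV. (G$k \<bullet> q)^2)"
  have SS0: "0 \<le> SS" unfolding SS_def by (intro add_nonneg_nonneg sum_nonneg) auto
  have h1: "\<bar>H$k \<bullet> q\<bar> \<le> sqrt SS" if "k \<in> B" for k
  proof -
    have "(H$k \<bullet> q)^2 \<le> (\<Sum>k\<in>B. (H$k \<bullet> q)^2)" using that by (intro member_le_sum) auto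
    also have "\<dots> \<le> SS" unfolding SS_def by (simp add: sum_nonneg)
    finally show ?thesis using real_sqrt_le_mono real_sqrt_abs by metis
  qed
  have h2: "\<bar>G$k \<bullet> q\<bar> \<le> sqrt SS" for k
  proof -
    have "(G$k \<bullet> q)^2 \<le> (\<Sum>k\<in>UNIV. (G$k \<bullet> q)^2)" by (intro member_le_sum) auto
    also have "\<dots> \<le> SS" unfolding SS_def by (simp add: sum_nonneg)
    finally show ?thesis using real_sqrt_le_mono real_sqrt_abs by metis
  qed
  define N where "N = real (card B) + real CARD('e)"
  have Npos: "N > 0" unfolding N_def by (simp add: add_nonneg_pos)
  have s1: "(\<Sum>k\<in>B. \<bar>H$k \<bullet> q\<bar>) \<le> (\<Sum>k\<in>B. sqrt SS)" by (rule sum_mono) (rule h1)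
  have s2: "(\<Sum>k\<in>UNIV. \<bar>G$k \<bullet> q\<bar>) \<le> (\<Sum>k\<in>(UNIV::'e set). sqrt SS)" by (rule sum_mono) (rule h2)
  have "Ax B H G q \<le> (\<Sum>k\<in>B. sqrt SS) + (\<Sum>k\<in>(UNIV::'e set). sqrt SS)"
    unfolding Ax_def using s1 s2 by linarith
  also have "\<dots> = N * sqrt SS" unfolding N_def by (simp add: algebra_simps)
  finally have "c / 2 \<le> N * sqrt SS" using Axb by linarith
  then have sq: "c / (2 * N) \<le> sqrt SS" using Npos by (simp add: divide_le_eq mult.commute field_simps)
  have "(c / (2 * N))^2 \<le> SS"
    using power_mono[OF sq, of 2] c Npos SS0 by simp
  then have kS: "\<kappa> * (c / (2 * N))^2 \<le> \<kappa> * SS" using k0 by (rule mult_left_mono)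
  have Wq: "\<bar>q \<bullet> (W *v q)\<bar> \<le> Wb" using quad_le[of q W q] nq Wb by simp
  have dj: "d$i = q \<bullet> (K *v q)" unfolding q_def Kdef using eig_quad[OF Q] by simp
  have "q \<bullet> (W *v q) + \<kappa> * SS \<le> q \<bullet> (K *v q)" using KW unfolding SS_def by blast
  then show ?thesis using dj Wq kS unfolding N_def by linarith
qed




lemma mn_colmask_Q:
  assumes "orthogonal_matrix (Q::real^'n^'n)"
  shows "mn (colmask L Q) \<le> real CARD('n) ^ 2"
proof -
  have e: "\<bar>colmask L Q $ i $ j\<bar> \<le> 1" for i j
  proof -
    have "\<bar>Q$i$j\<bar> = \<bar>column j Q $ i\<bar>" by (simp add: column_def)
    also have "\<dots> \<le> norm (column j Q)" by (rule component_le_norm_cart)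
    also have "\<dots> = 1" using col_unit[OF assms] .
    finally show ?thesis by (simp add: colmask_def)
  qed
  have "mn (colmask L Q) \<le> (\<Sum>i\<in>(UNIV::'n set). \<Sum>j\<in>(UNIV::'n set). 1)"
    unfolding mn_def by (intro sum_mono) (rule e)
  then show ?thesis by (simp add: power2_eq_square)
qed

lemma mn_diag_inv:
  assumes "\<forall>j\<in>L. d$j \<ge> lam" "lam > 0"
  shows "mn (diagm (\<chi> j. if j \<in> L then 1 / d$j else 0) :: real^'n^'n) \<le> real CARD('n) / lam"
proof -
  have "mn (diagm (\<chi> j. if j \<in> L then 1 / d$j else 0) :: real^'n^'n)
        = (\<Sum>i\<in>(UNIV::'n set). \<Sum>j\<in>(UNIV::'n set). if i = j then \<bar>if j \<in> L then 1 / d$j else 0\<bar> else 0)"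
    unfolding mn_def diagm_def by (intro sum.cong refl) auto
  also have "\<dots> = (\<Sum>i\<in>(UNIV::'n set). \<bar>if i \<in> L then 1 / d$i else 0\<bar>)"
    by (simp add: sum.delta)
  also have "\<dots> \<le> (\<Sum>i\<in>(UNIV::'n set). 1 / lam)"
  proof (rule sum_mono)
    fix i show "\<bar>if i \<in> L then 1 / d$i else 0\<bar> \<le> 1 / lam"
      using assms by (cases "i \<in> L") (auto simp: frac_le)
  qed
  finally show ?thesis by simp
qed

lemma mn_mult3: "mn (A ** B ** C) \<le> mn A * mn B * mn C"
proof -
  have "mn (A ** B ** C) \<le> mn (A ** B) * mn C" by (rule mn_mult)
  also have "\<dots> \<le> mn A * mn B * mn C" by (intro mult_right_mono mn_mult mn_nonneg)
  finally show ?thesis .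
qed

lemma final_bound:
  fixes Q Y Z :: "real^'n::finite^'n" and G :: "real^'n^'e::finite"
  assumes Q: "orthogonal_matrix Q"
    and dL: "\<forall>j\<in>L. d$j \<ge> lL" and lL: "lL > 0"
    and dS: "\<forall>j\<in>-L. d$j \<ge> lS" and lS: "lS > 0"
    and GZ: "G ** Z = 0"
    and eY: "mn (colmask L Q - Y) \<le> eps" and eZ: "mn (colmask (-L) Q - Z) \<le> eps"
    and mG: "mn G \<le> gb"
  shows "mn (G ** (Q ** diagm (\<chi> j. 1 / d$j) ** transpose Q) ** transpose G
            - G ** Y ** diagm (\<chi> j. if j \<in> L then 1 / d$j else 0) ** transpose Y ** transpose G)
         \<le> gb * (eps * (real CARD('n) / lL) * (2 * real CARD('n) ^ 2 + eps)) * gb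
           + (gb * eps) * (real CARD('n) / lS) * (gb * eps)"
proof -
  define QL where "QL = colmask L Q"
  define QS where "QS = colmask (-L) Q"
  define EL where "EL = (diagm (\<chi> j. if j \<in> L then 1 / d$j else 0) :: real^'n^'n)"
  define ES where "ES = (diagm (\<chi> j. if j \<in> -L then 1 / d$j else 0) :: real^'n^'n)"
  define P where "P = QL ** EL ** transpose QL"
  define R where "R = Y ** EL ** transpose Y"
  define S where "S = QS ** ES ** transpose QS"
  have Ki: "Q ** diagm (\<chi> j. 1 / d$j) ** transpose Q = P + S"
    unfolding P_def S_def QL_def QS_def EL_def ES_def using diag_split[of Q "\<lambda>j. 1 / d$j" L]
    by simp
  have T: "G ** (Q ** diagm (\<chi> j. 1 / d$j) ** transpose Q) ** transpose G
            - G ** Y ** EL ** transpose Y ** transpose G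
         = G ** (P - R) ** transpose G + G ** S ** transpose G"
  proof -
    have 1: "G ** Y ** EL ** transpose Y ** transpose G = G ** R ** transpose G"
      unfolding R_def by (simp add: matrix_mul_assoc)
    have 2: "G ** (P + S) ** transpose G = G ** P ** transpose G + G ** S ** transpose G"
      by (simp add: matrix_add_ldistrib mm_add_r)
    have 3: "G ** (P - R) ** transpose G = G ** P ** transpose G - G ** R ** transpose G"
      by (simp add: mm_diff_l mm_diff_r)
    show ?thesis unfolding Ki 1 2 3 by simp
  qed
  have PR: "P - R = (QL - Y) ** EL ** transpose QL + Y ** EL ** (transpose QL - transpose Y)"
    unfolding P_def R_def by (simp add: mm_diff_l mm_diff_r)
  have GS: "G ** S ** transpose G = (G ** (QS - Z)) ** ES ** transpose (G ** (QS - Z))"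
  proof -
    have "G ** (QS - Z) = G ** QS" using GZ by (simp add: mm_diff_l)
    then show ?thesis unfolding S_def by (simp add: matrix_transpose_mul matrix_mul_assoc)
  qed
  have n0: "0 \<le> real CARD('n)" by simp
  have mQL: "mn QL \<le> real CARD('n) ^ 2" unfolding QL_def by (rule mn_colmask_Q[OF Q])
  have mEL: "mn EL \<le> real CARD('n) / lL" unfolding EL_def by (rule mn_diag_inv[OF dL lL])
  have mES: "mn ES \<le> real CARD('n) / lS" unfolding ES_def by (rule mn_diag_inv) (use dS lS in auto)
  have eps0: "0 \<le> eps" using eY mn_nonneg order_trans by blast
  have gb0: "0 \<le> gb" using mG mn_nonneg order_trans by blast
  have mY: "mn Y \<le> real CARD('n) ^ 2 + eps"
  proof -
    have "Y = QL - (QL - Y)" by simp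
    then have "mn Y \<le> mn QL + mn (QL - Y)" using mn_diff[of QL "QL - Y"] by simp
    then show ?thesis using mQL eY unfolding QL_def by linarith
  qed
  have mPR: "mn (P - R) \<le> eps * (real CARD('n) / lL) * (2 * real CARD('n) ^ 2 + eps)"
  proof -
    have a: "mn ((QL - Y) ** EL ** transpose QL) \<le> eps * (real CARD('n) / lL) * real CARD('n) ^ 2"
    proof -
      have "mn ((QL - Y) ** EL ** transpose QL) \<le> mn (QL - Y) * mn EL * mn QL"
        using mn_mult3[of "QL - Y" EL "transpose QL"] by (simp add: mn_transpose)
      also have "\<dots> \<le> eps * (real CARD('n) / lL) * real CARD('n) ^ 2"
        using eY mEL mQL eps0 lL unfolding QL_def by (intro mult_mono) (auto simp: mn_nonneg)
      finally show ?thesis .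
    qed
    have b: "mn (Y ** EL ** (transpose QL - transpose Y)) \<le> (real CARD('n) ^ 2 + eps) * (real CARD('n) / lL) * eps"
    proof -
      have "transpose QL - transpose Y = transpose (QL - Y)" by (simp add: transpose_diff')
      then have "mn (Y ** EL ** (transpose QL - transpose Y)) \<le> mn Y * mn EL * mn (QL - Y)"
        using mn_mult3[of Y EL "transpose (QL - Y)"] by (simp add: mn_transpose)
      also have "\<dots> \<le> (real CARD('n) ^ 2 + eps) * (real CARD('n) / lL) * eps"
        using eY mEL mY eps0 lL unfolding QL_def by (intro mult_mono) (auto simp: mn_nonneg add_nonneg_nonneg)
      finally show ?thesis .
    qed
    have "mn (P - R) \<le> mn ((QL - Y) ** EL ** transpose QL) + mn (Y ** EL ** (transpose QL - transpose Y))"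
      unfolding PR by (rule mn_add)
    also have "\<dots> \<le> eps * (real CARD('n) / lL) * (2 * real CARD('n) ^ 2 + eps)"
    proof -
      have "eps * (real CARD('n) / lL) * real CARD('n) ^ 2 + (real CARD('n) ^ 2 + eps) * (real CARD('n) / lL) * eps
          = eps * (real CARD('n) / lL) * (2 * real CARD('n) ^ 2 + eps)" by (simp add: algebra_simps)
      then show ?thesis using a b by linarith
    qed
    finally show ?thesis .
  qed
  have t1: "mn (G ** (P - R) ** transpose G) \<le> gb * (eps * (real CARD('n) / lL) * (2 * real CARD('n) ^ 2 + eps)) * gb"
  proof -
    have "mn (G ** (P - R) ** transpose G) \<le> mn G * mn (P - R) * mn G"
      using mn_mult3[of G "P - R" "transpose G"] by (simp add: mn_transpose)
    also have "\<dots> \<le> gb * (eps * (real CARD('n) / lL) * (2 * real CARD('n) ^ 2 + eps)) * gb"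
      using mG mPR gb0 eps0 lL by (intro mult_mono) (auto simp: mn_nonneg)
    finally show ?thesis .
  qed
  have mGQ: "mn (G ** (QS - Z)) \<le> gb * eps"
  proof -
    have "mn (G ** (QS - Z)) \<le> mn G * mn (QS - Z)" by (rule mn_mult)
    also have "\<dots> \<le> gb * eps" using mG eZ gb0 unfolding QS_def by (intro mult_mono) (auto simp: mn_nonneg)
    finally show ?thesis .
  qed
  have t2: "mn (G ** S ** transpose G) \<le> (gb * eps) * (real CARD('n) / lS) * (gb * eps)"
  proof -
    have "mn (G ** S ** transpose G) \<le> mn (G ** (QS - Z)) * mn ES * mn (G ** (QS - Z))"
      unfolding GS using mn_mult3[of "G ** (QS - Z)" ES "transpose (G ** (QS - Z))"] by (simp add: mn_transpose)
    also have "\<dots> \<le> (gb * eps) * (real CARD('n) / lS) * (gb * eps)"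
      using mGQ mES gb0 eps0 lS by (intro mult_mono) (auto simp: mn_nonneg)
    finally show ?thesis .
  qed
  have T': "G ** (Q ** diagm (\<chi> j. 1 / d$j) ** transpose Q) ** transpose G
            - G ** Y ** diagm (\<chi> j. if j \<in> L then 1 / d$j else 0) ** transpose Y ** transpose G
         = G ** (P - R) ** transpose G + G ** S ** transpose G"
    using T unfolding EL_def .
  show ?thesis unfolding T'
    using mn_add[of "G ** (P - R) ** transpose G" "G ** S ** transpose G"] t1 t2
    by linarith
qed




lemma split_norm:
  assumes "norm (((x,s,y,z),v) - ((a,b,c,e),w)) < \<delta>"
  shows "norm ((x,s,y,z) - (a,b,c,e)) < \<delta>" "norm (x - a) < \<delta>" "norm (s - b) < \<delta>" "norm (v - w) < \<delta>"
proof -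
  have 1: "((x,s,y,z),v) - ((a,b,c,e),w) = ((x,s,y,z) - (a,b,c,e), v - w)" by simp
  show A: "norm ((x,s,y,z) - (a,b,c,e)) < \<delta>" using assms unfolding 1
    by (meson norm_fst_le le_less_trans)
  show "norm (v - w) < \<delta>" using assms unfolding 1 by (meson norm_snd_le le_less_trans)
  have 2: "(x,s,y,z) - (a,b,c,e) = (x - a, (s - b, y - c, z - e))" by simp
  show "norm (x - a) < \<delta>" using A unfolding 2 by (meson norm_fst_le le_less_trans)
  have "norm (s - b, y - c, z - e) < \<delta>" using A unfolding 2 by (meson norm_snd_le le_less_trans)
  then show "norm (s - b) < \<delta>" by (meson norm_fst_le le_less_trans)
qed

lemma tZZ_entry: "(transpose Z ** Z) $ j $ k = column j Z \<bullet> column k (Z::real^'n^'m)"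
  by (simp add: matrix_matrix_mult_def transpose_def column_def inner_vec_def)

lemma GZ_zero:
  fixes Z :: "real^'n^'n" and G :: "real^'n^'e"
  assumes "\<forall>j\<in>-L. column j Z \<in> nullspaceA B H G" "colmask (-L) Z = Z"
  shows "G ** Z = 0"
proof -
  have "(G ** Z) $ k $ j = 0" for k j
  proof -
    have e: "(G ** Z) $ k $ j = G$k \<bullet> column j Z"
      by (simp add: matrix_matrix_mult_def column_def inner_vec_def)
    show ?thesis
    proof (cases "j \<in> L")
      case True
      have "Z$i$j = 0" for i
        using arg_cong[where f="\<lambda>M. M$i$j", OF assms(2)] True by (simp add: colmask_def)
      then have "column j Z = 0" by (simp add: column_def vec_eq_iff)
      then show ?thesis using e by simp
    next
      case False
      then show ?thesis using e null_rows(2)[of "column j Z" B H G] assms(1) by auto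
    qed
  qed
  then show ?thesis by (simp add: vec_eq_iff)
qed

lemma col_diff: "j \<notin> L \<Longrightarrow> column j (colmask (-L) Q - Z) = column j Q - column j Z"
  by (simp add: column_def colmask_def vec_eq_iff)

lemma norm_rows_le: "norm (A::real^'n^'m) \<le> (\<Sum>i\<in>UNIV. norm (A$i))"
  unfolding norm_vec_def by (rule L2_set_le_sum) auto




theorem proposition4:
  fixes f :: "real^'n \<Rightarrow> real" and fg :: "real^'n \<Rightarrow> real^'n" and fH :: "real^'n \<Rightarrow> real^'n^'n"
    and g :: "real^'n \<Rightarrow> real^'e" and Jg :: "real^'n \<Rightarrow> real^'n^'e"
    and gH :: "'e \<Rightarrow> real^'n \<Rightarrow> real^'n^'n"
    and h :: "real^'n \<Rightarrow> real^'i" and Jh :: "real^'n \<Rightarrow> real^'n^'i"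
    and hH :: "'i \<Rightarrow> real^'n \<Rightarrow> real^'n^'n"
    and xs :: "real^'n" and ss zs vs :: "real^'i" and ys :: "real^'e"
    and C \<alpha> c1 c2 cY :: real
  assumes f_deriv: "\<And>x. (f has_derivative (\<lambda>d. fg x \<bullet> d)) (at x)"
    and fg_deriv: "\<And>x. (fg has_derivative (\<lambda>d. fH x *v d)) (at x)"
    and g_deriv: "\<And>x. (g has_derivative (\<lambda>d. Jg x *v d)) (at x)"
    and Jg_deriv: "\<And>x k. ((\<lambda>x. Jg x $ k) has_derivative (\<lambda>d. gH k x *v d)) (at x)"
    and h_deriv: "\<And>x. (h has_derivative (\<lambda>d. Jh x *v d)) (at x)"
    and Jh_deriv: "\<And>x k. ((\<lambda>x. Jh x $ k) has_derivative (\<lambda>d. hH k x *v d)) (at x)"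
    and W_lip: "\<exists>r>0. \<exists>Lw. Lw-lipschitz_on (ball (xs, ss, ys, zs) r)
                   (\<lambda>(x, s, y, z). hessL fH gH hH x y z)"
    and KKT: "gradpL fg Jg Jh g h xs ss ys zs vs = 0"
    and KKT_sign: "\<forall>i. ss$i \<ge> 0 \<and> vs$i \<ge> 0 \<and> ss$i * vs$i = 0"
    and strict_compl: "\<forall>i. ss$i + vs$i > 0"
    and LICQ: "\<forall>a b. (\<Sum>i\<in>{i. h xs $ i = 0}. a i *\<^sub>R (Jh xs $ i)) + (\<Sum>j\<in>UNIV. b j *\<^sub>R (Jg xs $ j)) = 0
                 \<longrightarrow> (\<forall>i\<in>{i. h xs $ i = 0}. a i = 0) \<and> (\<forall>j. b j = 0)"
    and SOSC: "\<forall>d. d \<noteq> 0 \<and> d \<in> nullspaceA {i. h xs $ i = 0} (Jh xs) (Jg xs)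
                 \<longrightarrow> d \<bullet> (hessL fH gH hH xs ys zs *v d) > 0"
    and C_pos: "C > 0" and \<alpha>_bounds: "0 < \<alpha>" "\<alpha> < 1"
    and c_bounds: "0 < c1" "c1 \<le> c2" and cY_pos: "cY > 0"
  shows "\<exists>\<delta>>0. \<exists>M. \<forall>(x::real^'n) (s::real^'i) (y::real^'e) (z::real^'i) (v::real^'i) (\<gamma>::real)
            (Q::real^'n^'n) (d::real^'n) (L::'n set) (Y::real^'n^'n) (Z::real^'n^'n).
     let B = {i. h xs $ i = 0};
         \<Xi> = duality s v;
         W = hessL fH gH hH x y z;
         G = Jg x; H = Jh x;
         K = condensed W G H s v \<gamma>;
         \<sigma> = min (1 / \<Xi>) \<gamma>
     in
     ( norm (((x, s, y, z), v) - ((xs, ss, ys, zs), vs)) < \<delta>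
     \<comment> \<open>(a) centrality conditions\<close>
     \<and> norm (gradpL fg Jg Jh g h x s y z v) \<le> C * \<Xi>
     \<and> (\<forall>i. s$i > 0 \<and> v$i > 0) \<and> (\<forall>i. s$i * v$i \<ge> \<alpha> * \<Xi>)
     \<comment> \<open>(b) gamma = Theta(1/Xi)\<close>
     \<and> c1 / \<Xi> \<le> \<gamma> \<and> \<gamma> \<le> c2 / \<Xi>
     \<comment> \<open>spectral decomposition K = U_L Sigma_L U_L^T + U_S Sigma_S U_S^T,
         with U_L = columns of Q in L, U_S = columns of Q outside L\<close>
     \<and> orthogonal_matrix Q \<and> K = Q ** diagm d ** transpose Q
     \<and> card L = CARD('e) + card B
     \<and> (\<forall>i\<in>L. \<forall>j\<in>-L. \<bar>d$j\<bar> \<le> \<bar>d$i\<bar>)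
     \<comment> \<open>Y: orthonormal basis of the row space of A (columns indexed by L)\<close>
     \<and> transpose Y ** Y = diagm (indvec L) \<and> colmask L Y = Y
     \<and> span {column j Y | j. j \<in> L} = rowspaceA B H G
     \<comment> \<open>Z: orthonormal basis of the null space of A (columns indexed by -L)\<close>
     \<and> transpose Z ** Z = diagm (indvec (-L)) \<and> colmask (-L) Z = Z
     \<and> span {column j Z | j. j \<in> -L} = nullspaceA B H G
     \<comment> \<open>U_L - Y = O(1/sigma), U_S - Z = O(1/sigma)\<close>
     \<and> norm (colmask L Q - Y) \<le> cY / \<sigma>
     \<and> norm (colmask (-L) Q - Z) \<le> cY / \<sigma>
     \<longrightarrow> invertible K
         \<and> norm (G ** matrix_inv K ** transpose G
                 - G ** Y ** diagm (\<chi> j. if j \<in> L then 1 / d$j else 0) ** transpose Y ** transpose G)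
           \<le> M * \<Xi>\<^sup>2)"
proof -
  define B where "B = {i. h xs $ i = 0}"
  define Hs where "Hs = Jh xs"
  define Gs where "Gs = Jg xs"
  define Ws where "Ws = hessL fH gH hH xs ys zs"
  define nn where "nn = real CARD('n)"
  define m where "m = real CARD('i)"
  define N where "N = real (card B) + real CARD('e)"
  have nn1: "nn \<ge> 1" unfolding nn_def by (simp add: Suc_leI)
  have m1: "m \<ge> 1" unfolding m_def by (simp add: Suc_leI)
  have Npos: "N > 0" unfolding N_def by (simp add: add_nonneg_pos)
  obtain c0 where c0: "c0 > 0" and rs: "\<forall>a b. c0 * l1c B a b \<le> norm (rcomb B Hs Gs a b)"
    using riesz_exists[where B=B and H=Hs and G=Gs] LICQ unfolding B_def Hs_def Gs_def by blast
  obtain \<mu>0 where mu: "\<mu>0 > 0" and sosc: "\<forall>u\<in>nullspaceA B Hs Gs. \<mu>0 * norm u ^ 2 \<le> u \<bullet> (Ws *v u)"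
    using sosc_const[where N="nullspaceA B Hs Gs" and W=Ws] SOSC subspace_null unfolding B_def Hs_def Gs_def Ws_def
    by blast
  obtain r0 Lw where r0: "r0 > 0" and lip: "lipschitz_on Lw (ball (xs, ss, ys, zs) r0)
                   (\<lambda>(x, s, y, z). hessL fH gH hH x y z)"
    using W_lip by blast
  have Lw0: "Lw \<ge> 0" using lip unfolding lipschitz_on_def by blast
  have Wclose: "norm (hessL fH gH hH x y z - Ws) \<le> Lw * norm ((x,s,y,z) - (xs,ss,ys,zs))"
    if "norm ((x,s,y,z) - (xs,ss,ys,zs)) < r0" for x s y z
  proof -
    have e: "dist (xs,ss,ys,zs) (x,s,y,z) = norm ((x,s,y,z) - (xs,ss,ys,zs))" by (metis dist_commute dist_norm)
    have "(x,s,y,z) \<in> ball (xs, ss, ys, zs) r0" using that unfolding mem_ball e .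
    moreover have "(xs,ss,ys,zs) \<in> ball (xs, ss, ys, zs) r0" using r0 by simp
    ultimately have "dist ((\<lambda>(x, s, y, z). hessL fH gH hH x y z) (x,s,y,z))
        ((\<lambda>(x, s, y, z). hessL fH gH hH x y z) (xs,ss,ys,zs)) \<le> Lw * dist (x,s,y,z) (xs,ss,ys,zs)"
      using lip unfolding lipschitz_on_def by blast
    then show ?thesis unfolding Ws_def by (simp add: dist_norm)
  qed
  have hss: "h xs + ss = 0" using KKT unfolding gradpL_def by (simp add: zero_prod_def)
  have vsB: "vs$i > 0" if "i \<in> B" for i
  proof -
    have "h xs $ i + ss $ i = 0" using hss by (simp add: vec_eq_iff)
    then have "ss$i = 0" using that unfolding B_def by simp
    then show ?thesis using strict_compl by (metis add_0)
  qed
  define vlow where "vlow = Min (insert 1 ((\<lambda>i. vs$i/2) ` B))"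
  have vlow0: "vlow > 0" unfolding vlow_def using vsB by (subst Min_gr_iff) auto
  have vlowB: "vlow \<le> vs$i/2" if "i \<in> B" for i unfolding vlow_def using that by (intro Min_le) auto
  define Df where "Df = (\<lambda>x. (\<Sum>i\<in>B. norm (Jh x $ i - Hs $ i)) + (\<Sum>j\<in>UNIV. norm (Jg x $ j - Gs $ j)))"
  have cH: "continuous (at xs) (\<lambda>x. Jh x $ i)" for i using has_derivative_continuous[OF Jh_deriv] .
  have cG: "continuous (at xs) (\<lambda>x. Jg x $ i)" for i using has_derivative_continuous[OF Jg_deriv] .
  have cDf: "continuous (at xs) Df" unfolding Df_def by (intro continuous_intros cH cG)
  have Df0: "Df xs = 0" unfolding Df_def Hs_def Gs_def by simp
  define mW where "mW = mn Ws"
  have mW0: "mW \<ge> 0" unfolding mW_def by (rule mn_nonneg)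
  define \<eta>0 where "\<eta>0 = min 1 (\<mu>0 / (4 * (2*\<mu>0 + 3*mW)))"
  have eta0: "\<eta>0 > 0" "\<eta>0 \<le> 1" using mu mW0 unfolding \<eta>0_def by auto
  have eta0s: "(2*\<mu>0 + 3 * mn Ws) * \<eta>0 \<le> \<mu>0/4"
  proof -
    have p: "2*\<mu>0 + 3*mW > 0" using mu mW0 by simp
    have "\<eta>0 \<le> \<mu>0 / (4 * (2*\<mu>0 + 3*mW))" unfolding \<eta>0_def by simp
    then have "(2*\<mu>0 + 3*mW) * \<eta>0 \<le> (2*\<mu>0 + 3*mW) * (\<mu>0 / (4 * (2*\<mu>0 + 3*mW)))"
      using p by (intro mult_left_mono) auto
    also have "\<dots> = \<mu>0/4" using p by (simp add: field_simps)
    finally show ?thesis unfolding mW_def .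
  qed
  define D0 where "D0 = min (c0/2) (min 1 (c0 * \<eta>0 / 2))"
  have D0: "D0 > 0" using c0 eta0 unfolding D0_def by auto
  obtain \<delta>1 where d1: "\<delta>1 > 0" and d1c: "\<forall>x. dist x xs < \<delta>1 \<longrightarrow> dist (Df x) (Df xs) < D0"
    using cDf D0 unfolding continuous_at_eps_delta by blast
  define Abs where "Abs = (\<Sum>i\<in>B. norm (Hs$i)) + (\<Sum>j\<in>UNIV. norm (Gs$j))"
  define Abar where "Abar = Abs + 1"
  have Abar0: "Abar > 0" unfolding Abar_def Abs_def by (simp add: add_nonneg_pos sum_nonneg)
  define mc where "mc = min 1 c1"
  have mc0: "mc > 0" using c_bounds unfolding mc_def by simp
  define cE where "cE = nn^2 * cY / mc"
  have cE0: "cE > 0" unfolding cE_def using mc0 cY_pos nn1 by simp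
  define cc where "cc = min c1 (vlow^2 / m)"
  have cc0: "cc > 0" unfolding cc_def using c_bounds vlow0 m1 by simp
  define kap where "kap = cc * ((c0/2) / (2 * N))^2"
  have kap0: "kap > 0" unfolding kap_def using cc0 c0 Npos by simp
  define Wb where "Wb = mW + 1"
  have Wb0: "Wb > 0" unfolding Wb_def using mW0 by simp
  define gb where "gb = mn Gs + real CARD('e) * nn"
  define Xi0 where "Xi0 = min (1/(cE+1)) (min (1/(2*nn*cE+1)) (min (c0*\<eta>0/(2*(Abar*cE+1))) (kap/(2*Wb))))"
  have Xi0: "Xi0 > 0" unfolding Xi0_def using cE0 nn1 c0 eta0 Abar0 kap0 Wb0 by (simp add: add_pos_pos)
  define V where "V = norm vs + 1 + norm ss"
  have V0: "V > 0" unfolding V_def using norm_ge_zero[of vs] norm_ge_zero[of ss] by linarith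
  define LL where "LL = min (\<mu>0/4) 1"
  have LL0: "LL > 0" unfolding LL_def using mu by simp
  define \<delta> where "\<delta> = min 1 (min r0 (min \<delta>1 (min vlow (min (LL / (nn^2*Lw+1)) (Xi0 / V)))))"
  have \<delta>0: "\<delta> > 0" unfolding \<delta>_def using r0 d1 vlow0 LL0 Lw0 Xi0 V0 by (simp add: add_nonneg_pos)
  define M where "M = gb^2 * cE * (2*nn/kap) * (2*nn^2+1) + gb^2 * cE^2 * (2*nn/\<mu>0)"
  have MAINP: "\<forall>(x::real^'n) (s::real^'i) (y::real^'e) (z::real^'i) (v::real^'i) (\<gamma>::real)
            (Q::real^'n^'n) (d::real^'n) (L::'n set) (Y::real^'n^'n) (Z::real^'n^'n).
     let B = {i. h xs $ i = 0};
         \<Xi> = duality s v;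
         W = hessL fH gH hH x y z;
         G = Jg x; H = Jh x;
         K = condensed W G H s v \<gamma>;
         \<sigma> = min (1 / \<Xi>) \<gamma>
     in
     ( norm (((x, s, y, z), v) - ((xs, ss, ys, zs), vs)) < \<delta>
     \<and> norm (gradpL fg Jg Jh g h x s y z v) \<le> C * \<Xi>
     \<and> (\<forall>i. s$i > 0 \<and> v$i > 0) \<and> (\<forall>i. s$i * v$i \<ge> \<alpha> * \<Xi>)
     \<and> c1 / \<Xi> \<le> \<gamma> \<and> \<gamma> \<le> c2 / \<Xi>
     \<and> orthogonal_matrix Q \<and> K = Q ** diagm d ** transpose Q
     \<and> card L = CARD('e) + card B
     \<and> (\<forall>i\<in>L. \<forall>j\<in>-L. \<bar>d$j\<bar> \<le> \<bar>d$i\<bar>)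
     \<and> transpose Y ** Y = diagm (indvec L) \<and> colmask L Y = Y
     \<and> span {column j Y | j. j \<in> L} = rowspaceA B H G
     \<and> transpose Z ** Z = diagm (indvec (-L)) \<and> colmask (-L) Z = Z
     \<and> span {column j Z | j. j \<in> -L} = nullspaceA B H G
     \<and> norm (colmask L Q - Y) \<le> cY / \<sigma>
     \<and> norm (colmask (-L) Q - Z) \<le> cY / \<sigma>
     \<longrightarrow> invertible K
         \<and> norm (G ** matrix_inv K ** transpose G
                 - G ** Y ** diagm (\<chi> j. if j \<in> L then 1 / d$j else 0) ** transpose Y ** transpose G)
           \<le> M * \<Xi>\<^sup>2)"
    unfolding Let_def
  proof (intro allI impI, elim conjE, goal_cases)
    case (1 x s y z v \<gamma> Q d L Y Z)
    note A = 1
    define \<Xi> where "\<Xi> = duality s v"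
    define W where "W = hessL fH gH hH x y z"
    define G where "G = Jg x"
    define H where "H = Jh x"
    define K where "K = condensed W G H s v \<gamma>"
    define \<sigma> where "\<sigma> = min (1 / \<Xi>) \<gamma>"
    note nrm = split_norm[OF A(1)]
    have Bdef: "{i. h xs $ i = 0} = B" unfolding B_def ..
    have Q: "orthogonal_matrix Q" using A(7) .
    have KQ: "K = Q ** diagm d ** transpose Q" using A(8) unfolding K_def W_def G_def H_def .
    have \<delta>le: "\<delta> \<le> 1" "\<delta> \<le> r0" "\<delta> \<le> \<delta>1" "\<delta> \<le> vlow" "\<delta> \<le> LL / (nn^2*Lw+1)" "\<delta> \<le> Xi0 / V"
      unfolding \<delta>_def by auto
    have sv: "s \<bullet> v = (\<Sum>i\<in>UNIV. s$i * v$i)" by (simp add: inner_vec_def)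
    have svpos: "s \<bullet> v > 0" unfolding sv using A(3) by (intro sum_pos) (auto intro: mult_pos_pos)
    have Xi_def': "\<Xi> = s \<bullet> v / m" unfolding \<Xi>_def duality_def m_def ..
    have Xi0': "\<Xi> > 0" unfolding Xi_def' using svpos m1 by simp
    have svle: "s \<bullet> v \<le> \<delta> * V"
    proof -
      have "\<forall>i. ss$i * vs$i = 0" using KKT_sign by blast
      then have "(\<Sum>i\<in>UNIV. ss$i * vs$i) = 0" by (intro sum.neutral) blast
      then have z0: "ss \<bullet> vs = 0" by (simp add: inner_vec_def)
      have dec: "s \<bullet> v = (s - ss) \<bullet> v + ss \<bullet> (v - vs) + ss \<bullet> vs"
        by (simp add: inner_diff_left inner_diff_right)
      have nv: "norm v \<le> norm vs + 1"
        using nrm(4) \<delta>le(1) norm_triangle_ineq2[of v vs] by linarith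
      have a: "\<bar>(s - ss) \<bullet> v\<bar> \<le> \<delta> * (norm vs + 1)"
      proof -
        have "\<bar>(s - ss) \<bullet> v\<bar> \<le> norm (s - ss) * norm v" by (rule Cauchy_Schwarz_ineq2)
        also have "\<dots> \<le> \<delta> * (norm vs + 1)" using nrm(3) nv \<delta>0 by (intro mult_mono) auto
        finally show ?thesis .
      qed
      have b: "\<bar>ss \<bullet> (v - vs)\<bar> \<le> norm ss * \<delta>"
      proof -
        have "\<bar>ss \<bullet> (v - vs)\<bar> \<le> norm ss * norm (v - vs)" by (rule Cauchy_Schwarz_ineq2)
        also have "\<dots> \<le> norm ss * \<delta>" using nrm(4) by (intro mult_left_mono) auto
        finally show ?thesis .
      qed
      show ?thesis using dec z0 a b unfolding V_def by (simp add: algebra_simps)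
    qed
    have XiX: "\<Xi> \<le> Xi0"
    proof -
      have "\<Xi> \<le> s \<bullet> v" unfolding Xi_def' using svpos m1 by (simp add: divide_le_eq mult_le_cancel_left1 mult.commute)
      also have "\<dots> \<le> \<delta> * V" by (rule svle)
      also have "\<dots> \<le> Xi0" using \<delta>le(6) V0 by (simp add: le_divide_eq)
      finally show ?thesis .
    qed
    have A16: "span ((\<lambda>j. column j Z) ` (-L)) = nullspaceA B H G"
    proof -
      have "{column j Z | j. j \<in> -L} = (\<lambda>j. column j Z) ` (-L)" by auto
      then show ?thesis using A(16) unfolding Bdef H_def G_def by simp
    qed
    have Dfx: "Df x < D0"
    proof -
      have "dist x xs < \<delta>1" using nrm(2) \<delta>le(3) by (simp add: dist_norm)
      then have "dist (Df x) (Df xs) < D0" using d1c by blast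
      then show ?thesis using Df0 by (simp add: dist_real_def)
    qed
    have Dfx0: "Df x \<ge> 0" unfolding Df_def by (intro add_nonneg_nonneg sum_nonneg) auto
    have Dx: "(\<Sum>i\<in>B. norm (H$i - Hs$i)) + (\<Sum>j\<in>UNIV. norm (G$j - Gs$j)) = Df x"
      unfolding Df_def H_def G_def ..
    have D0le: "D0 \<le> c0/2" "D0 \<le> 1" "D0 \<le> c0 * \<eta>0 / 2" unfolding D0_def by auto
    have rx: "\<forall>a b. (c0/2) * l1c B a b \<le> norm (rcomb B H G a b)"
      using riesz_perturb[where H=Hs and G=Gs and H'=H and G'=G, OF rs] Dx Dfx D0le by simp
    have Wn: "norm (W - Ws) \<le> Lw * \<delta>"
    proof -
      have "norm (W - Ws) \<le> Lw * norm ((x,s,y,z) - (xs,ss,ys,zs))"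
        unfolding W_def using Wclose nrm(1) \<delta>le(2) by simp
      also have "\<dots> \<le> Lw * \<delta>" using nrm(1) Lw0 by (intro mult_left_mono) auto
      finally show ?thesis .
    qed
    have mWW: "mn (W - Ws) \<le> LL"
    proof -
      have "mn (W - Ws) \<le> nn * nn * norm (W - Ws)" using mn_le_norm[of "W - Ws"] unfolding nn_def .
      also have "\<dots> \<le> nn^2 * (Lw * \<delta>)" using Wn nn1 by (simp add: power2_eq_square mult_left_mono)
      also have "\<dots> \<le> (nn^2 * Lw + 1) * \<delta>" using \<delta>0 by (simp add: algebra_simps)
      also have "\<dots> \<le> LL" using \<delta>le(5) Lw0 by (simp add: le_divide_eq mult.commute add_nonneg_pos)
      finally show ?thesis .
    qed
    have LLle: "LL \<le> \<mu>0/4" "LL \<le> 1" unfolding LL_def by auto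
    have mWb: "mn W \<le> Wb"
    proof -
      have "W = Ws + (W - Ws)" by simp
      then have "mn W \<le> mn Ws + mn (W - Ws)" by (metis mn_add)
      then show ?thesis using mWW LLle unfolding Wb_def mW_def by linarith
    qed
    have Ab: "(\<Sum>i\<in>B. norm (H$i)) + (\<Sum>j\<in>UNIV. norm (G$j)) \<le> Abar"
    proof -
      have 1: "(\<Sum>i\<in>B. norm (H$i)) \<le> (\<Sum>i\<in>B. norm (Hs$i) + norm (H$i - Hs$i))"
        by (rule sum_mono) (rule norm_triangle_sub)
      have 2: "(\<Sum>j\<in>UNIV. norm (G$j)) \<le> (\<Sum>j\<in>UNIV. norm (Gs$j) + norm (G$j - Gs$j))"
        by (rule sum_mono) (rule norm_triangle_sub)
      show ?thesis using 1 2 Dx Dfx D0le unfolding Abar_def Abs_def sum.distrib by linarith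
    qed
    have mG: "mn G \<le> gb"
    proof -
      have "G = Gs + (G - Gs)" by simp
      then have a: "mn G \<le> mn Gs + mn (G - Gs)" by (metis mn_add)
      have "norm (G - Gs) \<le> (\<Sum>j\<in>UNIV. norm ((G - Gs)$j))" by (rule norm_rows_le)
      also have "\<dots> = (\<Sum>j\<in>UNIV. norm (G$j - Gs$j))" by simp
      also have "\<dots> \<le> Df x"
      proof -
        have "0 \<le> (\<Sum>i\<in>B. norm (H$i - Hs$i))" by (simp add: sum_nonneg)
        then show ?thesis using Dx by linarith
      qed
      finally have "norm (G - Gs) \<le> 1" using Dfx D0le by linarith
      then have "real CARD('e) * nn * norm (G - Gs) \<le> real CARD('e) * nn * 1"
        using nn1 by (intro mult_left_mono) auto
      then have "mn (G - Gs) \<le> real CARD('e) * nn"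
        using mn_le_norm[of "G - Gs"] unfolding nn_def by linarith
      then show ?thesis using a unfolding gb_def by linarith
    qed
    have \<sigma>low: "mc / \<Xi> \<le> \<sigma>"
    proof -
      have "mc / \<Xi> \<le> 1 / \<Xi>" using Xi0' unfolding mc_def by (simp add: divide_right_mono)
      moreover have "mc / \<Xi> \<le> c1 / \<Xi>" using Xi0' unfolding mc_def by (simp add: divide_right_mono)
      then have "mc / \<Xi> \<le> \<gamma>" using A(5) unfolding \<Xi>_def by linarith
      ultimately show ?thesis unfolding \<sigma>_def by simp
    qed
    have "mc / \<Xi> > 0" using mc0 Xi0' by simp
    then have \<sigma>pos: "\<sigma> > 0" using \<sigma>low by linarith
    define E where "E = cE * \<Xi>"
    have E0: "E \<ge> 0" unfolding E_def using cE0 Xi0' by simp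
    have cYs: "nn * nn * (cY / \<sigma>) \<le> E"
    proof -
      have "cY / \<sigma> \<le> cY / (mc / \<Xi>)" using \<sigma>low mc0 Xi0' cY_pos \<sigma>pos by (intro divide_left_mono) auto
      also have "\<dots> = cY * \<Xi> / mc" by simp
      finally have "nn * nn * (cY / \<sigma>) \<le> nn * nn * (cY * \<Xi> / mc)" using nn1 by (intro mult_left_mono) auto
      also have "\<dots> = E" unfolding E_def cE_def by (simp add: power2_eq_square)
      finally show ?thesis .
    qed
    have eY: "mn (colmask L Q - Y) \<le> E"
    proof -
      have "mn (colmask L Q - Y) \<le> nn * nn * norm (colmask L Q - Y)" using mn_le_norm[of "colmask L Q - Y"] unfolding nn_def .
      also have "\<dots> \<le> nn * nn * (cY / \<sigma>)" using A(17) nn1 unfolding \<sigma>_def \<Xi>_def by (intro mult_left_mono) auto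
      finally show ?thesis using cYs by linarith
    qed
    have eZ: "mn (colmask (-L) Q - Z) \<le> E"
    proof -
      have "mn (colmask (-L) Q - Z) \<le> nn * nn * norm (colmask (-L) Q - Z)" using mn_le_norm[of "colmask (-L) Q - Z"] unfolding nn_def .
      also have "\<dots> \<le> nn * nn * (cY / \<sigma>)" using A(18) nn1 unfolding \<sigma>_def \<Xi>_def by (intro mult_left_mono) auto
      finally show ?thesis using cYs by linarith
    qed
    have XiXs: "\<Xi> \<le> 1/(cE+1)" "\<Xi> \<le> 1/(2*nn*cE+1)" "\<Xi> \<le> c0*\<eta>0/(2*(Abar*cE+1))" "\<Xi> \<le> kap/(2*Wb)"
      using XiX unfolding Xi0_def min.bounded_iff by blast+
    have E1: "E \<le> 1"
    proof -
      have "\<Xi> * (cE+1) \<le> 1" using XiXs(1) cE0 by (simp add: le_divide_eq)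
      then show ?thesis unfolding E_def using Xi0' by (simp add: algebra_simps)
    qed
    have nE: "nn * E \<le> 1/2"
    proof -
      have "\<Xi> * (2*nn*cE+1) \<le> 1" using XiXs(2) cE0 nn1 by (simp add: le_divide_eq add_pos_pos)
      then show ?thesis unfolding E_def using Xi0' by (simp add: algebra_simps)
    qed
    have AE: "Abar * E \<le> c0 * \<eta>0 / 2"
    proof -
      have "\<Xi> * (2*(Abar*cE+1)) \<le> c0*\<eta>0" using XiXs(3) cE0 Abar0 by (simp add: le_divide_eq add_pos_pos)
      then show ?thesis unfolding E_def using Xi0' by (simp add: algebra_simps)
    qed
    have XW: "\<Xi> * Wb \<le> kap/2" using XiXs(4) Wb0 by (simp add: le_divide_eq algebra_simps)
    have zN: "\<forall>j\<in>-L. column j Z \<in> nullspaceA B H G"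
      using A16 by (auto intro: span_base)
    have Zspan: "nullspaceA B H G \<subseteq> span ((\<lambda>j. column j Z) ` (-L))" using A16 by simp
    have Zorth: "\<forall>j\<in>-L. \<forall>k\<in>-L. column j Z \<bullet> column k Z = (if j = k then 1 else 0)"
    proof (intro ballI)
      fix j k assume "j \<in> -L" "k \<in> -L"
      then show "column j Z \<bullet> column k Z = (if j = k then 1 else 0)"
        using arg_cong[where f="\<lambda>M. M$j$k", OF A(14)] by (simp add: tZZ_entry diagm_def indvec_def)
    qed
    have GZ: "G ** Z = 0" using GZ_zero[OF zN A(15)] .
    have QZ: "\<forall>j\<in>-L. norm (column j Q - column j Z) \<le> E"
    proof
      fix j assume j: "j \<in> -L"
      have "norm (column j Q - column j Z) = norm (column j (colmask (-L) Q - Z))" using j by (simp add: col_diff)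
      also have "\<dots> \<le> mn (colmask (-L) Q - Z)" by (rule norm_column_le)
      finally show "norm (column j Q - column j Z) \<le> E" using eZ by linarith
    qed
    have vs_ratio: "cc / \<Xi> \<le> v$i / s$i" if iB: "i \<in> B" for i
    proof -
      have "\<bar>v$i - vs$i\<bar> \<le> norm (v - vs)" using component_le_norm_cart[of "v - vs" i] by simp
      then have vi: "v$i \<ge> vlow" using nrm(4) \<delta>le(4) vlowB[OF iB] by linarith
      have si: "s$i > 0" "v$i > 0" using A(3) by auto
      have "s$i * v$i \<le> s \<bullet> v" unfolding sv using A(3)
        by (intro member_le_sum) (auto intro: mult_nonneg_nonneg less_imp_le)
      then have svm: "s$i * v$i \<le> m * \<Xi>" unfolding Xi_def' using m1 by simp
      have "cc \<le> vlow^2 / m" unfolding cc_def by simp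
      then have "cc / \<Xi> \<le> (vlow^2 / m) / \<Xi>" using Xi0' by (intro divide_right_mono) auto
      also have "\<dots> = vlow^2 / (m * \<Xi>)" by simp
      also have "\<dots> \<le> (v$i)^2 / (s$i * v$i)"
        using vi vlow0 si svm by (intro frac_le power_mono) auto
      also have "\<dots> = v$i / s$i" using si by (simp add: power2_eq_square)
      finally show ?thesis .
    qed
    have quadK: "q \<bullet> (K *v q) = q \<bullet> (W *v q) + (\<Sum>i\<in>UNIV. (v$i / s$i) * (H$i \<bullet> q)^2) + \<gamma> * (\<Sum>j\<in>UNIV. (G$j \<bullet> q)^2)" for q
      unfolding K_def by (rule quad_condensed)
    have "c1 / \<Xi> > 0" using c_bounds Xi0' by simp
    then have g0: "\<gamma> > 0" using A(5) unfolding \<Xi>_def by linarith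
    have rat0: "v$i / s$i \<ge> 0" for i using A(3)[rule_format, of i] by simp
    have KW1: "\<forall>q. q \<bullet> (W *v q) \<le> q \<bullet> (K *v q)"
    proof
      fix q
      have "0 \<le> (\<Sum>i\<in>UNIV. (v$i / s$i) * (H$i \<bullet> q)^2)" using rat0 by (intro sum_nonneg mult_nonneg_nonneg) auto
      moreover have "0 \<le> \<gamma> * (\<Sum>j\<in>UNIV. (G$j \<bullet> q)^2)" using g0 by (simp add: sum_nonneg)
      ultimately show "q \<bullet> (W *v q) \<le> q \<bullet> (K *v q)" unfolding quadK by linarith
    qed
    define \<kappa> where "\<kappa> = cc / \<Xi>"
    have k0: "\<kappa> \<ge> 0" unfolding \<kappa>_def using cc0 Xi0' by simp
    have KW2: "\<forall>q. q \<bullet> (W *v q) + \<kappa> * ((\<Sum>k\<in>B. (H$k \<bullet> q)^2) + (\<Sum>k\<in>UNIV. (G$k \<bullet> q)^2)) \<le> q \<bullet> (K *v q)"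
    proof
      fix q
      have a: "\<kappa> * (\<Sum>k\<in>B. (H$k \<bullet> q)^2) \<le> (\<Sum>i\<in>UNIV. (v$i / s$i) * (H$i \<bullet> q)^2)"
      proof -
        have "\<kappa> * (\<Sum>k\<in>B. (H$k \<bullet> q)^2) = (\<Sum>k\<in>B. \<kappa> * (H$k \<bullet> q)^2)" by (simp add: sum_distrib_left)
        also have "\<dots> \<le> (\<Sum>k\<in>B. (v$k / s$k) * (H$k \<bullet> q)^2)"
          using vs_ratio unfolding \<kappa>_def by (intro sum_mono mult_right_mono) auto
        also have "\<dots> \<le> (\<Sum>i\<in>UNIV. (v$i / s$i) * (H$i \<bullet> q)^2)"
          using rat0 by (intro sum_mono2 mult_nonneg_nonneg) auto
        finally show ?thesis .
      qed
      have b: "\<kappa> * (\<Sum>k\<in>UNIV. (G$k \<bullet> q)^2) \<le> \<gamma> * (\<Sum>j\<in>UNIV. (G$j \<bullet> q)^2)"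
      proof (rule mult_right_mono)
        have "cc \<le> c1" unfolding cc_def by simp
        then have "\<kappa> \<le> c1 / \<Xi>" unfolding \<kappa>_def using Xi0' by (intro divide_right_mono) auto
        then show "\<kappa> \<le> \<gamma>" using A(5) unfolding \<Xi>_def by linarith
      qed (simp add: sum_nonneg)
      show "q \<bullet> (W *v q) + \<kappa> * ((\<Sum>k\<in>B. (H$k \<bullet> q)^2) + (\<Sum>k\<in>UNIV. (G$k \<bullet> q)^2)) \<le> q \<bullet> (K *v q)"
        unfolding quadK using a b by (simp add: distrib_left)
    qed
    have DxLe: "(\<Sum>i\<in>B. norm (H$i - Hs$i)) + (\<Sum>j\<in>UNIV. norm (G$j - Gs$j)) \<le> Df x"
      using Dx by simp
    have etaj: "(Abar * E + Df x) / c0 \<le> \<eta>0"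
    proof -
      have "Abar * E + Df x \<le> c0 * \<eta>0" using AE Dfx D0le by linarith
      then show ?thesis using c0 by (simp add: divide_le_eq mult.commute)
    qed
    have omj: "mn (W - Ws) \<le> \<mu>0/4" using mWW LLle by linarith
    have dS: "\<forall>j\<in>-L. d$j \<ge> \<mu>0/2"
    proof
      fix j assume j: "j \<in> -L"
      have zNj: "column j Z \<in> nullspaceA B H G" using zN j by blast
      have QZj: "norm (column j Q - column j Z) \<le> E" using QZ j by blast
      show "d$j \<ge> \<mu>0/2"
        using S_part[OF c0 rs mu sosc Q KQ KW1 zNj QZj Ab DxLe etaj eta0(2) eta0s omj] .
    qed
    have c0h: "c0/2 > 0" using c0 by simp
    have dL: "\<forall>i\<in>L. d$i \<ge> kap / (2 * \<Xi>)"
    proof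
      fix i assume iL: "i \<in> L"
      have "d$i \<ge> \<kappa> * ((c0/2) / (2 * (real (card B) + real CARD('e))))^2 - Wb"
        using L_part[OF c0h rx Q KQ iL KW2 k0 Zspan Zorth QZ _ E0 mWb] nE unfolding nn_def by blast
      also have "\<kappa> * ((c0/2) / (2 * (real (card B) + real CARD('e))))^2 = kap / \<Xi>"
        unfolding \<kappa>_def kap_def N_def by simp
      finally have a: "d$i \<ge> kap / \<Xi> - Wb" .
      have "Wb \<le> kap / (2 * \<Xi>)" using XW Xi0' by (simp add: le_divide_eq mult.commute mult.left_commute)
      moreover have "kap / \<Xi> = kap / (2 * \<Xi>) + kap / (2 * \<Xi>)" by simp
      ultimately show "d$i \<ge> kap / (2 * \<Xi>)" using a by linarith
    qed
    have lL: "kap / (2 * \<Xi>) > 0" using kap0 Xi0' by simp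
    have lS: "\<mu>0 / 2 > 0" using mu by simp
    have dnz: "\<forall>j. d$j \<noteq> 0"
    proof
      fix j show "d$j \<noteq> 0"
      proof (cases "j \<in> L")
        case True then have "d$j \<ge> kap / (2 * \<Xi>)" using dL by blast
        then show ?thesis using lL by linarith
      next
        case False then have "j \<in> -L" by simp
        then have "d$j \<ge> \<mu>0/2" using dS by blast
        then show ?thesis using lS by linarith
      qed
    qed
    have invK: "invertible K" and iK: "matrix_inv K = Q ** diagm (\<chi> j. 1 / d$j) ** transpose Q"
      using inv_spectral[OF Q dnz] unfolding KQ by auto
    have fb: "mn (G ** (Q ** diagm (\<chi> j. 1 / d$j) ** transpose Q) ** transpose G
            - G ** Y ** diagm (\<chi> j. if j \<in> L then 1 / d$j else 0) ** transpose Y ** transpose G)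
         \<le> gb * (E * (nn / (kap / (2 * \<Xi>))) * (2 * nn ^ 2 + E)) * gb
           + (gb * E) * (nn / (\<mu>0 / 2)) * (gb * E)"
      using final_bound[OF Q dL lL dS lS GZ eY eZ mG] unfolding nn_def .
    have gb0: "gb \<ge> 0" using mG mn_nonneg order_trans by blast
    have t1: "gb * (E * (nn / (kap / (2 * \<Xi>))) * (2 * nn ^ 2 + E)) * gb
              \<le> gb^2 * cE * (2*nn/kap) * (2*nn^2+1) * \<Xi>^2"
    proof -
      have "gb * (E * (nn / (kap / (2 * \<Xi>))) * (2 * nn ^ 2 + E)) * gb
            = (gb^2 * cE * (2*nn/kap) * \<Xi>^2) * (2 * nn ^ 2 + E)"
        unfolding E_def using kap0 Xi0' by (simp add: field_simps power2_eq_square)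
      also have "\<dots> \<le> (gb^2 * cE * (2*nn/kap) * \<Xi>^2) * (2 * nn ^ 2 + 1)"
        using E1 cE0 kap0 nn1 by (intro mult_left_mono) auto
      finally show ?thesis by (simp add: mult_ac)
    qed
    have t2: "(gb * E) * (nn / (\<mu>0 / 2)) * (gb * E) = gb^2 * cE^2 * (2*nn/\<mu>0) * \<Xi>^2"
      unfolding E_def using mu by (simp add: field_simps power2_eq_square)
    have fin: "norm (G ** matrix_inv K ** transpose G
            - G ** Y ** diagm (\<chi> j. if j \<in> L then 1 / d$j else 0) ** transpose Y ** transpose G) \<le> M * \<Xi>^2"
    proof -
      have "norm (G ** matrix_inv K ** transpose G
            - G ** Y ** diagm (\<chi> j. if j \<in> L then 1 / d$j else 0) ** transpose Y ** transpose G)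
          \<le> mn (G ** matrix_inv K ** transpose G
            - G ** Y ** diagm (\<chi> j. if j \<in> L then 1 / d$j else 0) ** transpose Y ** transpose G)"
        by (rule norm_le_mn)
      also have "\<dots> \<le> gb^2 * cE * (2*nn/kap) * (2*nn^2+1) * \<Xi>^2 + gb^2 * cE^2 * (2*nn/\<mu>0) * \<Xi>^2"
        using fb t1 t2 unfolding iK by linarith
      also have "\<dots> = M * \<Xi>^2" unfolding M_def by (simp add: algebra_simps)
      finally show ?thesis .
    qed
    show ?case using invK fin unfolding K_def W_def G_def H_def \<Xi>_def by blast
  qed
  show ?thesis using \<delta>0 MAINP by blast
qed


end
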